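(* For any parameter $\theta\ne0$, the tests $T^{(1)}_\alpha$ and $T^{(2)}_\alpha$ satisfy, almost surely in $\mathbf X$, $$\mathbb P_\theta\left(T^{(2)}_\alpha>0\,\middle|\,\mathbf X\right)\ge\mathbb P_\theta\left(T^{(1)}_\alpha>0\,\middle|\,\mathbf X\right).$$
   Context: Model: $\mathcal{H}$ separable real Hilbert space; $X$ a centered random element with $\mathbb{E}\|X\|^2<\infty$; $Y=\langle X,\theta\rangle+\epsilon$ with $\epsilon$ centered of variance $\sigma^2>0$ independent of $X$; data $(X_i,Y_i)_{i\le n}$ i.i.d. copies of $(X,Y)$, $\mathbf X=(X_i)$, $\mathbf Y=(Y_i)$; $\mathbb P_\theta$ is probability under slope $\theta$. $\widehat\Gamma_nh=\frac1n\sum_i\langle X_i,h\rangle X_i$ has eigenvalues $\widehat\lambda_1\ge\dots$ and orthonormal eigenfunctions $\widehat V_j$. For an integer $k\ge1$ (all $k$ below are at most $n/2$): $\hat k=k\wedge\mathrm{Rank}(\widehat\Gamma_n)$, $\mathbf W_{ij}=\langle X_i,\widehat V_j\rangle$ ($j\le\hat k$), $\widehat{\boldsymbol\Pi}_k$ orthogonal projection of $\mathbb R^n$ onto the column span of $\mathbf W$, and for $U\in\mathbb R^n$, $\phi_k(U,\mathbf X)=\|\widehat{\boldsymbol\Pi}_kU\|_n^2/(\|U-\widehat{\boldsymbol\Pi}_kU\|_n^2/(n-\hat k))$. $\bar{\mathcal F}_{d_1,d_2}(u)$ is the probability that a Fisher$(d_1,d_2)$ variable exceeds $u$, $\bar{\mathcal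 F}^{-1}_{d_1,d_2}$ its inverse. $\bar k_n$ is a power of 2 with $\bar k_n\le n/2$, $\mathcal K_n=\{1,2,4,\dots,\bar k_n\}$. $T_\alpha=\sup_{k\in\mathcal K_n,\,k\le\mathrm{Rank}(\widehat\Gamma_n)}[\phi_k(\mathbf Y,\mathbf X)-\hat k\,\bar{\mathcal F}^{-1}_{\hat k,n-\hat k}(\alpha_{\mathcal K_n}(\mathbf X))]$, rejecting $H_0$ when $T_\alpha>0$; $T^{(1)}_\alpha$ uses $\alpha_{\mathcal K_n}(\mathbf X)=\alpha/|\mathcal K_n|$ and $T^{(2)}_\alpha$ uses $\alpha_{\mathcal K_n}(\mathbf X)=q_{\mathbf X,\alpha}$, the $\alpha$-quantile of the conditional distribution given $\mathbf X$ of $\inf_{k\in\mathcal K_n}\bar{\mathcal F}_{\hat k,n-\hat k}[\phi_k(\mathbf Z,\mathbf X)/\hat k]$ with $\mathbf Z$ a standard Gaussian vector of $\mathbb R^n$ independent of the data. *)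

theory Defs
  imports "HOL-Probability.Probability"
begin

definition gauss :: "nat \<Rightarrow> (nat \<Rightarrow> real) measure" where
  "gauss d = PiM {..<d} (\<lambda>_. density lborel std_normal_density)"

text \<open>Tail function of the Fisher(d1,d2) law: probability that
  (chi2_d1/d1)/(chi2_d2/d2) exceeds u, chi-squares built from independent Gaussians.\<close>
definition fisher_tail :: "nat \<Rightarrow> nat \<Rightarrow> real \<Rightarrow> real" where
  "fisher_tail d1 d2 u = measure (gauss (d1 + d2))
     {z \<in> space (gauss (d1 + d2)).
        ((\<Sum>i<d1. (z i)\<^sup>2) / real d1) / ((\<Sum>i\<in>{d1..<d1+d2}. (z i)\<^sup>2) / real d2) > u}"

definition fisher_tail_inv :: "nat \<Rightarrow> nat \<Rightarrow> real \<Rightarrow> real" where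
  "fisher_tail_inv d1 d2 a = Inf {u. 0 \<le> u \<and> fisher_tail d1 d2 u \<le> a}"

definition emp_cov :: "nat \<Rightarrow> (nat \<Rightarrow> 'h::real_inner) \<Rightarrow> 'h \<Rightarrow> 'h" where
  "emp_cov n X h = (1 / real n) *\<^sub>R (\<Sum>i<n. (X i \<bullet> h) *\<^sub>R X i)"

text \<open>V_0..V_{r-1} are orthonormal eigenvectors of the empirical covariance with
  nonincreasing positive eigenvalues lam_0 \<ge> ... \<ge> lam_{r-1} > 0 exhausting its range;
  hence r = Rank of the empirical covariance.\<close>
definition is_eigdec :: "nat \<Rightarrow> (nat \<Rightarrow> 'h::real_inner) \<Rightarrow> nat \<Rightarrow> (nat \<Rightarrow> real) \<Rightarrow> (nat \<Rightarrow> 'h) \<Rightarrow> bool" where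
  "is_eigdec n X r lam V \<longleftrightarrow>
     (\<forall>j<r. \<forall>l<r. V j \<bullet> V l = (if j = l then 1 else 0)) \<and>
     (\<forall>j<r. emp_cov n X (V j) = lam j *\<^sub>R V j) \<and>
     (\<forall>j l. j \<le> l \<longrightarrow> l < r \<longrightarrow> lam l \<le> lam j) \<and>
     (\<forall>j<r. 0 < lam j) \<and>
     (\<forall>h. emp_cov n X h \<in> span (V ` {..<r}))"

text \<open>Orthogonal projection of U in R^n onto the span of the columns
  W_{.j} = (<X_i, V_j>)_{i<n}, j < kh.\<close>
definition proj :: "nat \<Rightarrow> (nat \<Rightarrow> 'h::real_inner) \<Rightarrow> (nat \<Rightarrow> 'h) \<Rightarrow> nat \<Rightarrow> (nat \<Rightarrow> real) \<Rightarrow> (nat \<Rightarrow> real)" where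
  "proj n X V kh U = (THE p. (\<exists>c. \<forall>i<n. p i = (\<Sum>j<kh. c j * (X i \<bullet> V j))) \<and>
       (\<forall>j<kh. (\<Sum>i<n. (U i - p i) * (X i \<bullet> V j)) = 0) \<and> (\<forall>i\<ge>n. p i = 0))"

definition normn :: "nat \<Rightarrow> (nat \<Rightarrow> real) \<Rightarrow> real" where
  "normn n U = sqrt ((1 / real n) * (\<Sum>i<n. (U i)\<^sup>2))"

definition phi :: "nat \<Rightarrow> (nat \<Rightarrow> 'h::real_inner) \<Rightarrow> (nat \<Rightarrow> 'h) \<Rightarrow> nat \<Rightarrow> (nat \<Rightarrow> real) \<Rightarrow> real" where
  "phi n X V kh U = (normn n (proj n X V kh U))\<^sup>2 /
      ((normn n (\<lambda>i. U i - proj n X V kh U i))\<^sup>2 / real (n - kh))"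

text \<open>Test statistic T_alpha with level-function value a = alpha_K(X); r = Rank.
  The supremum over the empty set is -\<infinity>.\<close>
definition test_stat :: "nat \<Rightarrow> (nat \<Rightarrow> 'h::real_inner) \<Rightarrow> nat \<Rightarrow> (nat \<Rightarrow> 'h) \<Rightarrow> nat set \<Rightarrow> real \<Rightarrow> (nat \<Rightarrow> real) \<Rightarrow> ereal" where
  "test_stat n X r V K a U = (SUP k\<in>{k\<in>K. k \<le> r}.
     ereal (phi n X V (min k r) U - real (min k r) * fisher_tail_inv (min k r) (n - min k r) a))"

text \<open>q_{X,alpha}: alpha-quantile (generalized inverse of the cdf) of the law of
  inf_{k in K} Fbar_{kh, n-kh}(phi_k(Z,X)/kh), Z standard Gaussian in R^n.\<close>
definition q_quant :: "nat \<Rightarrow> (nat \<Rightarrow> 'h::real_inner) \<Rightarrow> nat \<Rightarrow> (nat \<Rightarrow> 'h) \<Rightarrow> nat set \<Rightarrow> real \<Rightarrow> real" where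
  "q_quant n X r V K \<alpha> = Inf {t. \<alpha> \<le> measure (gauss n)
      {z \<in> space (gauss n). (INF k\<in>K. fisher_tail (min k r) (n - min k r)
                                   (phi n X V (min k r) z / real (min k r))) \<le> t}}"

end

theory Submission
  imports Defs
begin

definition Q2 :: "(real \<Rightarrow> real \<Rightarrow> ennreal) \<Rightarrow> ennreal" where
  "Q2 h = (\<integral>\<^sup>+b. \<integral>\<^sup>+a. h a b \<partial>lborel \<partial>lborel)"

abbreviation "mble2 h \<equiv> (\<lambda>(a,b). h a b) \<in> borel_measurable (lborel \<Otimes>\<^sub>M lborel)"

lemma mble2_comp:
  assumes h: "mble2 h" and f: "f \<in> borel_measurable (lborel \<Otimes>\<^sub>M lborel)"
    and g: "g \<in> borel_measurable (lborel \<Otimes>\<^sub>M lborel)"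
  shows "mble2 (\<lambda>a b. h (f (a,b)) (g (a,b)))"
proof -
  have "(\<lambda>x. (f x, g x)) \<in> (lborel \<Otimes>\<^sub>M lborel) \<rightarrow>\<^sub>M (lborel \<Otimes>\<^sub>M lborel)"
    using f g by (auto intro!: measurable_Pair simp: measurable_lborel1)
  from measurable_comp[OF this h] show ?thesis by (simp add: comp_def case_prod_beta)
qed

lemma mble2_slice1:
  assumes h: "mble2 h" shows "(\<lambda>a. h a b) \<in> borel_measurable borel"
proof -
  have "(\<lambda>a. (a,b)) \<in> borel \<rightarrow>\<^sub>M (lborel \<Otimes>\<^sub>M lborel)"
    by (auto intro!: measurable_Pair simp: measurable_lborel1)
  from measurable_comp[OF this h] show ?thesis by (simp add: comp_def)
qed

lemma mble2_slice2:
  assumes h: "mble2 h" shows "(\<lambda>b. h a b) \<in> borel_measurable borel"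
proof -
  have "(\<lambda>b. (a,b)) \<in> borel \<rightarrow>\<^sub>M (lborel \<Otimes>\<^sub>M lborel)"
    by (auto intro!: measurable_Pair simp: measurable_lborel1)
  from measurable_comp[OF this h] show ?thesis by (simp add: comp_def)
qed

lemma shearX:
  assumes h: "mble2 h"
  shows "Q2 (\<lambda>a b. h (a + t * b) b) = Q2 h"
  unfolding Q2_def
proof (rule nn_integral_cong)
  fix b :: real
  have m: "(\<lambda>a. h a b) \<in> borel_measurable borel"
    by (rule mble2_slice1[OF h])
  show "(\<integral>\<^sup>+a. h (a + t * b) b \<partial>lborel) = (\<integral>\<^sup>+a. h a b \<partial>lborel)"
    using nn_integral_real_affine[OF m, of 1 "t*b"] by (simp add: add.commute)
qed

lemma swap2:
  assumes h: "mble2 h"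
  shows "Q2 h = (\<integral>\<^sup>+a. \<integral>\<^sup>+b. h a b \<partial>lborel \<partial>lborel)"
  unfolding Q2_def using lborel_pair.Fubini'[OF h] by simp

lemma shearY:
  assumes h: "mble2 h"
  shows "Q2 (\<lambda>a b. h a (b + t * a)) = Q2 h"
proof -
  have h': "mble2 (\<lambda>a b. h a (b + t * a))"
    using mble2_comp[OF h, of fst "\<lambda>(a,b). b + t*a"] by (simp add: case_prod_beta)
  have "Q2 (\<lambda>a b. h a (b + t * a)) = (\<integral>\<^sup>+a. \<integral>\<^sup>+b. h a (b + t*a) \<partial>lborel \<partial>lborel)"
    by (rule swap2[OF h'])
  also have "\<dots> = (\<integral>\<^sup>+a. \<integral>\<^sup>+b. h a b \<partial>lborel \<partial>lborel)"
  proof (rule nn_integral_cong)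
    fix a :: real
    have m: "(\<lambda>b. h a b) \<in> borel_measurable borel"
      by (rule mble2_slice2[OF h])
    show "(\<integral>\<^sup>+b. h a (b + t * a) \<partial>lborel) = (\<integral>\<^sup>+b. h a b \<partial>lborel)"
      using nn_integral_real_affine[OF m, of 1 "t*a"] by (simp add: add.commute)
  qed
  also have "\<dots> = Q2 h" using swap2[OF h] by simp
  finally show ?thesis .
qed

lemma rot2_lborel:
  fixes c s :: real
  assumes h: "mble2 h" and cs: "c\<^sup>2 + s\<^sup>2 = 1" and c1: "c \<noteq> -1"
  shows "Q2 (\<lambda>a b. h (c * a - s * b) (s * a + c * b)) = Q2 h"
proof -
  define t where "t = s / (1 + c)"
  have c1': "1 + c \<noteq> 0" using c1 by auto
  have st: "s * t = 1 - c"
  proof -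
    have "s * t = s\<^sup>2 / (1 + c)" by (simp add: t_def power2_eq_square)
    also have "\<dots> = (1 - c) * (1 + c) / (1 + c)" using cs by (simp add: algebra_simps power2_eq_square)
    finally show ?thesis using c1' by simp
  qed
  have tt: "2 * t - s * t * t = s"
  proof -
    have "2 * t - s * t * t = t * (2 - s * t)" by (simp add: algebra_simps)
    also have "\<dots> = t * (1 + c)" using st by simp
    finally have "2 * t - s * t * t = t * (1 + c)" .
    thus ?thesis using c1' by (simp add: t_def)
  qed
  define h1 where "h1 a b = h (a + (-t) * b) b" for a b
  define h2 where "h2 a b = h1 a (b + s * a)" for a b
  have m1: "mble2 h1" unfolding h1_def
    using mble2_comp[OF h, of "\<lambda>(a,b). a + (-t)*b" snd] by (simp add: case_prod_beta)
  have m2: "mble2 h2" unfolding h2_def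
    using mble2_comp[OF m1, of fst "\<lambda>(a,b). b + s*a"] by (simp add: case_prod_beta)
  have eq: "(\<lambda>a b. h (c * a - s * b) (s * a + c * b)) = (\<lambda>a b. h2 (a + (-t) * b) b)"
  proof (intro ext)
    fix a b :: real
    have e1: "a + - t * b + - t * (b + s * (a + - t * b)) = c * a - s * b"
    proof -
      have "a + - t * b + - t * (b + s * (a + - t * b)) = a * (1 - s * t) - b * (2 * t - s * t * t)"
        by (simp add: algebra_simps)
      thus ?thesis using st tt by simp
    qed
    have e2: "b + s * (a + - t * b) = s * a + c * b"
    proof -
      have "b + s * (a + - t * b) = s * a + b * (1 - s * t)" by (simp add: algebra_simps)
      thus ?thesis using st by simp
    qed
    have "h2 (a + (-t) * b) b = h (a + - t * b + - t * (b + s * (a + - t * b))) (b + s * (a + - t * b))"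
      by (simp only: h2_def h1_def)
    also have "\<dots> = h (c * a - s * b) (b + s * (a + - t * b))" by (subst e1) (rule refl)
    also have "\<dots> = h (c * a - s * b) (s * a + c * b)" by (subst e2) (rule refl)
    finally show "h (c * a - s * b) (s * a + c * b) = h2 (a + (-t) * b) b" by simp
  qed
  have "Q2 (\<lambda>a b. h2 (a + (-t) * b) b) = Q2 h2" by (rule shearX[OF m2])
  also have "\<dots> = Q2 h1" unfolding h2_def by (rule shearY[OF m1])
  also have "\<dots> = Q2 h" unfolding h1_def by (rule shearX[OF h])
  finally show ?thesis using eq by simp
qed

abbreviation NN :: "real measure" where "NN \<equiv> density lborel (\<lambda>x. ennreal (std_normal_density x))"

lemma gauss_def2: "gauss d = PiM {..<d} (\<lambda>_. NN)" by (simp add: gauss_def)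

lemma phi_prod_rot:
  fixes c s a b :: real
  assumes cs: "c\<^sup>2 + s\<^sup>2 = 1"
  shows "std_normal_density (c * a - s * b) * std_normal_density (s * a + c * b)
       = std_normal_density a * std_normal_density b"
proof -
  have sq: "(c * a - s * b)\<^sup>2 + (s * a + c * b)\<^sup>2 = a\<^sup>2 + b\<^sup>2"
  proof -
    have "(c * a - s * b)\<^sup>2 + (s * a + c * b)\<^sup>2 = (c\<^sup>2 + s\<^sup>2) * (a\<^sup>2 + b\<^sup>2)"
      by (simp add: power2_eq_square algebra_simps)
    thus ?thesis using cs by simp
  qed
  have "\<And>x y::real. std_normal_density x * std_normal_density y = (1 / sqrt (2 * pi))\<^sup>2 * exp (- (x\<^sup>2 + y\<^sup>2) / 2)"
    by (simp add: std_normal_density_def power2_eq_square exp_add[symmetric] field_simps)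
  thus ?thesis using sq by metis
qed

lemma NN_prob: "prob_space NN" using prob_space_normal_density by simp

lemma sets_NN[simp]: "sets NN = sets borel" by simp

lemma mble2_inner:
  assumes g: "mble2 g"
  shows "(\<lambda>b. \<integral>\<^sup>+a. g a b \<partial>NN) \<in> borel_measurable borel"
proof -
  interpret prob_space NN by (rule NN_prob)
  have g': "(\<lambda>(x,y). g x y) \<in> borel_measurable (NN \<Otimes>\<^sub>M borel)"
    using g by (simp add: measurable_cong_sets[OF sets_pair_measure_cong[of NN lborel borel lborel]])
  have e: "(\<lambda>(b,a). g a b) = (\<lambda>(x,y). g x y) \<circ> (\<lambda>(x,y). (y,x))" by (auto simp: fun_eq_iff)
  have "(\<lambda>(b,a). g a b) \<in> borel_measurable (borel \<Otimes>\<^sub>M NN)"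
    unfolding e by (rule measurable_comp[OF measurable_pair_swap' g'])
  from borel_measurable_nn_integral[of "\<lambda>b a. g a b", OF this] show ?thesis by simp
qed

lemma rot2_gauss:
  fixes c s :: real
  assumes h: "mble2 h" and cs: "c\<^sup>2 + s\<^sup>2 = 1" and c1: "c \<noteq> -1"
  shows "(\<integral>\<^sup>+b. \<integral>\<^sup>+a. h (c * a - s * b) (s * a + c * b) \<partial>NN \<partial>NN) = (\<integral>\<^sup>+b. \<integral>\<^sup>+a. h a b \<partial>NN \<partial>NN)"
proof -
  define H where "H a b = ennreal (std_normal_density a * std_normal_density b) * h a b" for a b
  have mH: "mble2 H" unfolding H_def using h by (simp add: case_prod_beta) measurable
  have gen: "(\<integral>\<^sup>+b. \<integral>\<^sup>+a. g a b \<partial>NN \<partial>NN) = Q2 (\<lambda>a b. ennreal (std_normal_density a * std_normal_density b) * g a b)"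
    if g: "mble2 g" for g
  proof -
    have "(\<integral>\<^sup>+b. \<integral>\<^sup>+a. g a b \<partial>NN \<partial>NN) = (\<integral>\<^sup>+b. ennreal (std_normal_density b) * (\<integral>\<^sup>+a. g a b \<partial>NN) \<partial>lborel)"
    proof (rule nn_integral_density)
      show "(\<lambda>b. \<integral>\<^sup>+a. g a b \<partial>NN) \<in> borel_measurable lborel"
        using mble2_inner[OF g] by simp
    qed auto
    also have "\<dots> = (\<integral>\<^sup>+b. ennreal (std_normal_density b) * (\<integral>\<^sup>+a. ennreal (std_normal_density a) * g a b \<partial>lborel) \<partial>lborel)"
    proof (intro nn_integral_cong arg_cong2[where f="(*)"] refl)
      fix b
      have "(\<lambda>a. g a b) \<in> borel_measurable lborel" using mble2_slice1[OF g] by simp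
      thus "(\<integral>\<^sup>+a. g a b \<partial>NN) = (\<integral>\<^sup>+a. ennreal (std_normal_density a) * g a b \<partial>lborel)"
        by (intro nn_integral_density) auto
    qed
    also have "\<dots> = Q2 (\<lambda>a b. ennreal (std_normal_density a * std_normal_density b) * g a b)"
      unfolding Q2_def
    proof (intro nn_integral_cong)
      fix b
      have "(\<lambda>a. g a b) \<in> borel_measurable borel" using mble2_slice1[OF g] by simp
      hence "(\<lambda>a. ennreal (std_normal_density a) * g a b) \<in> borel_measurable lborel" by simp
      from nn_integral_cmult[OF this, of "ennreal (std_normal_density b)"]
      show "ennreal (std_normal_density b) * (\<integral>\<^sup>+a. ennreal (std_normal_density a) * g a b \<partial>lborel)
         = (\<integral>\<^sup>+a. ennreal (std_normal_density a * std_normal_density b) * g a b \<partial>lborel)"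
        by (simp add: mult.assoc mult.left_commute ennreal_mult'')
    qed
    finally show ?thesis .
  qed
  have mR: "mble2 (\<lambda>a b. h (c * a - s * b) (s * a + c * b))"
    using mble2_comp[OF h, of "\<lambda>(a,b). c * a - s * b" "\<lambda>(a,b). s * a + c * b"] by (simp add: case_prod_beta)
  have "(\<integral>\<^sup>+b. \<integral>\<^sup>+a. h (c * a - s * b) (s * a + c * b) \<partial>NN \<partial>NN)
      = Q2 (\<lambda>a b. H (c * a - s * b) (s * a + c * b))"
    unfolding gen[OF mR] H_def phi_prod_rot[OF cs] ..
  also have "\<dots> = Q2 H" by (rule rot2_lborel[OF mH cs c1])
  also have "\<dots> = (\<integral>\<^sup>+b. \<integral>\<^sup>+a. h a b \<partial>NN \<partial>NN)" unfolding gen[OF h] H_def ..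
  finally show ?thesis .
qed

interpretation NNP: product_sigma_finite "\<lambda>_::nat. NN"
  unfolding product_sigma_finite_def using NN_prob prob_space_imp_sigma_finite by blast

lemma upd_meas:
  assumes "i \<notin> I"
  shows "(\<lambda>(x,a). x(i := a)) \<in> (PiM I (\<lambda>_::nat. NN) \<Otimes>\<^sub>M NN) \<rightarrow>\<^sub>M PiM (insert i I) (\<lambda>_. NN)"
proof -
  have "(\<lambda>\<omega> k. (\<lambda>\<omega>. if k = i then snd \<omega> else fst \<omega> k) \<omega>) \<in> (PiM I (\<lambda>_::nat. NN) \<Otimes>\<^sub>M NN) \<rightarrow>\<^sub>M PiM (insert i I) (\<lambda>_. NN)"
  proof (rule measurable_PiM_single')
    fix k assume "k \<in> insert i I"
    show "(\<lambda>\<omega>. if k = i then snd \<omega> else fst \<omega> k) \<in> (PiM I (\<lambda>_::nat. NN) \<Otimes>\<^sub>M NN) \<rightarrow>\<^sub>M NN"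
    proof (cases "k = i")
      case True thus ?thesis by simp
    next
      case False
      with \<open>k \<in> insert i I\<close> have "k \<in> I" by auto
      thus ?thesis using False by simp
    qed
  next
    show "(\<lambda>\<omega> k. if k = i then snd \<omega> else fst \<omega> k) \<in> space (PiM I (\<lambda>_. NN) \<Otimes>\<^sub>M NN) \<rightarrow> (\<Pi>\<^sub>E k\<in>insert i I. space NN)"
      using assms by (auto simp: space_pair_measure space_PiM PiE_iff extensional_def split: if_splits)
  qed
  moreover have "(\<lambda>\<omega> k. (\<lambda>\<omega>. if k = i then snd \<omega> else fst \<omega> k) \<omega>) = (\<lambda>(x,a). x(i := a))"
    by (auto simp: fun_eq_iff)
  ultimately show ?thesis by simp
qed

lemma nn_insert_meas:
  assumes "finite I" "i \<notin> I" and F: "F \<in> borel_measurable (PiM (insert i I) (\<lambda>_::nat. NN))"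
  shows "(\<lambda>x. \<integral>\<^sup>+a. F (x(i := a)) \<partial>NN) \<in> borel_measurable (PiM I (\<lambda>_. NN))"
proof -
  have e: "(\<lambda>(x,a). F (x(i := a))) = F \<circ> (\<lambda>(x,a). x(i := a))" by (auto simp: fun_eq_iff)
  have "(\<lambda>(x,a). F (x(i := a))) \<in> borel_measurable (PiM I (\<lambda>_::nat. NN) \<Otimes>\<^sub>M NN)"
    unfolding e by (rule measurable_comp[OF upd_meas[OF assms(2)] F])
  from NNP.borel_measurable_nn_integral[OF this] show ?thesis .
qed

lemma decomp2:
  assumes K: "finite K" "i \<in> K" "l \<in> K" "i \<noteq> l"
    and F: "F \<in> borel_measurable (PiM K (\<lambda>_::nat. NN))"
  shows "integral\<^sup>N (PiM K (\<lambda>_. NN)) F =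
    (\<integral>\<^sup>+x. \<integral>\<^sup>+b. \<integral>\<^sup>+a. F (x(l := b, i := a)) \<partial>NN \<partial>NN \<partial>PiM (K - {i,l}) (\<lambda>_. NN))"
proof -
  define J where "J = K - {i,l}"
  have K1: "K = insert i (insert l J)" using K by (auto simp: J_def)
  have fJ: "finite J" "i \<notin> insert l J" "l \<notin> J" using K by (auto simp: J_def)
  have F': "F \<in> borel_measurable (PiM (insert i (insert l J)) (\<lambda>_::nat. NN))" using F K1 by simp
  have "integral\<^sup>N (PiM (insert i (insert l J)) (\<lambda>_. NN)) F
      = (\<integral>\<^sup>+x. \<integral>\<^sup>+a. F (x(i := a)) \<partial>NN \<partial>PiM (insert l J) (\<lambda>_. NN))"
    by (rule NNP.product_nn_integral_insert[OF _ fJ(2) F']) (use fJ in simp)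
  also have "\<dots> = (\<integral>\<^sup>+x. \<integral>\<^sup>+b. (\<integral>\<^sup>+a. F (x(l := b, i := a)) \<partial>NN) \<partial>NN \<partial>PiM J (\<lambda>_. NN))"
    by (rule NNP.product_nn_integral_insert[OF fJ(1) fJ(3) nn_insert_meas[OF _ fJ(2) F']]) (use fJ in simp)
  finally have X: "integral\<^sup>N (PiM (insert i (insert l J)) (\<lambda>_. NN)) F =
    (\<integral>\<^sup>+x. \<integral>\<^sup>+b. \<integral>\<^sup>+a. F (x(l := b, i := a)) \<partial>NN \<partial>NN \<partial>PiM J (\<lambda>_. NN))" .
  have K2: "insert i (insert l J) = K" using K1 by simp
  from X[unfolded K2] show ?thesis by (simp only: J_def)
qed

lemma distr_eq_by_nn:
  assumes G: "G \<in> M \<rightarrow>\<^sub>M M"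
    and inv: "\<And>F. F \<in> borel_measurable M \<Longrightarrow> (\<integral>\<^sup>+x. F (G x) \<partial>M) = integral\<^sup>N M F"
  shows "distr M M G = M"
proof (rule measure_eqI)
  fix A assume A: "A \<in> sets (distr M M G)"
  hence A': "A \<in> sets M" by simp
  have "emeasure (distr M M G) A = emeasure M (G -` A \<inter> space M)" by (rule emeasure_distr[OF G A'])
  also have "\<dots> = (\<integral>\<^sup>+x. indicator (G -` A \<inter> space M) x \<partial>M)"
    using measurable_sets[OF G A'] by simp
  also have "\<dots> = (\<integral>\<^sup>+x. indicator A (G x) \<partial>M)"
    by (intro nn_integral_cong) (auto simp: indicator_def)
  also have "\<dots> = integral\<^sup>N M (indicator A)" using A' by (intro inv) simp
  also have "\<dots> = emeasure M A" using A' by simp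
  finally show "emeasure (distr M M G) A = emeasure M A" .
qed simp

lemma upd2_meas:
  assumes x: "x \<in> space (PiM J (\<lambda>_::nat. NN))" and "i \<notin> J" "l \<notin> J" "i \<noteq> l"
  shows "(\<lambda>(a,b). x(l := b, i := a)) \<in> (lborel \<Otimes>\<^sub>M lborel) \<rightarrow>\<^sub>M PiM (insert i (insert l J)) (\<lambda>_. NN)"
proof -
  have "(\<lambda>\<omega> k. (\<lambda>\<omega>. if k = i then fst \<omega> else if k = l then snd \<omega> else x k) \<omega>) \<in> (lborel \<Otimes>\<^sub>M lborel) \<rightarrow>\<^sub>M PiM (insert i (insert l J)) (\<lambda>_. NN)"
  proof (rule measurable_PiM_single')
    fix k assume "k \<in> insert i (insert l J)"
    show "(\<lambda>\<omega>. if k = i then fst \<omega> else if k = l then snd \<omega> else x k) \<in> (lborel \<Otimes>\<^sub>M lborel) \<rightarrow>\<^sub>M NN"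
      by (cases "k = i"; cases "k = l") (auto simp: measurable_lborel1)
  next
    show "(\<lambda>\<omega> k. if k = i then fst \<omega> else if k = l then snd \<omega> else x k) \<in> space (lborel \<Otimes>\<^sub>M lborel) \<rightarrow> (\<Pi>\<^sub>E k\<in>insert i (insert l J). space NN)"
      using assms x by (auto simp: space_pair_measure space_PiM PiE_iff extensional_def split: if_splits)
  qed
  moreover have "(\<lambda>\<omega> k. (\<lambda>\<omega>. if k = i then fst \<omega> else if k = l then snd \<omega> else x k) \<omega>) = (\<lambda>(a,b). x(l := b, i := a))"
    by (auto simp: fun_eq_iff)
  ultimately show ?thesis by simp
qed

definition givens :: "nat \<Rightarrow> nat \<Rightarrow> nat \<Rightarrow> real \<Rightarrow> real \<Rightarrow> (nat \<Rightarrow> real) \<Rightarrow> (nat \<Rightarrow> real)" where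
  "givens n i l c s z = (\<lambda>k\<in>{..<n}. if k = i then c * z i - s * z l else if k = l then s * z i + c * z l else z k)"

lemma comp_meas: "j < n \<Longrightarrow> (\<lambda>x. x j) \<in> borel_measurable (PiM {..<n} (\<lambda>_::nat. NN))"
  using measurable_component_singleton[of j "{..<n}" "\<lambda>_::nat. NN"]
  by (simp add: measurable_cong_sets[OF refl sets_NN])

lemma givens_meas: "i < n \<Longrightarrow> l < n \<Longrightarrow> givens n i l c s \<in> gauss n \<rightarrow>\<^sub>M gauss n"
  unfolding givens_def gauss_def2
  by (intro measurable_restrict) (simp add: measurable_cong_sets[OF refl sets_NN])

lemma givens_nn:
  assumes il: "i < n" "l < n" "i \<noteq> l" and cs: "c\<^sup>2 + s\<^sup>2 = 1" "c \<noteq> -1"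
    and F: "F \<in> borel_measurable (gauss n)"
  shows "(\<integral>\<^sup>+z. F (givens n i l c s z) \<partial>gauss n) = integral\<^sup>N (gauss n) F"
proof -
  define J where "J = {..<n} - {i,l}"
  have K: "finite {..<n}" "i \<in> {..<n}" "l \<in> {..<n}" "i \<noteq> l" using il by auto
  have F': "F \<in> borel_measurable (PiM {..<n} (\<lambda>_::nat. NN))" using F by (simp add: gauss_def2)
  have FG: "(\<lambda>z. F (givens n i l c s z)) \<in> borel_measurable (PiM {..<n} (\<lambda>_::nat. NN))"
    using measurable_comp[OF givens_meas[OF il(1,2)] F] by (simp add: comp_def gauss_def2)
  have ins: "insert i (insert l J) = {..<n}" using il by (auto simp: J_def)
  have "(\<integral>\<^sup>+z. F (givens n i l c s z) \<partial>gauss n)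
      = (\<integral>\<^sup>+x. \<integral>\<^sup>+b. \<integral>\<^sup>+a. F (givens n i l c s (x(l := b, i := a))) \<partial>NN \<partial>NN \<partial>PiM J (\<lambda>_. NN))"
    unfolding gauss_def2 J_def by (rule decomp2[OF K FG])
  also have "\<dots> = (\<integral>\<^sup>+x. \<integral>\<^sup>+b. \<integral>\<^sup>+a. F (x(l := b, i := a)) \<partial>NN \<partial>NN \<partial>PiM J (\<lambda>_. NN))"
  proof (rule nn_integral_cong)
    fix x assume x: "x \<in> space (PiM J (\<lambda>_::nat. NN))"
    define h where "h a b = F (x(l := b, i := a))" for a b
    have hm: "mble2 h"
    proof -
      have "(\<lambda>(a,b). x(l := b, i := a)) \<in> (lborel \<Otimes>\<^sub>M lborel) \<rightarrow>\<^sub>M PiM {..<n} (\<lambda>_. NN)"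
        using upd2_meas[OF x, of i l] il unfolding ins by (simp add: J_def)
      from measurable_comp[OF this F'] show ?thesis
        by (simp add: h_def comp_def case_prod_beta')
    qed
    have xe: "\<And>k. k \<notin> J \<Longrightarrow> x k = undefined" using x by (auto simp: space_PiM PiE_def extensional_def)
    have eq: "givens n i l c s (x(l := b, i := a)) = x(l := s * a + c * b, i := c * a - s * b)" for a b
      unfolding givens_def using il xe by (auto simp: fun_eq_iff J_def)
    show "(\<integral>\<^sup>+b. \<integral>\<^sup>+a. F (givens n i l c s (x(l := b, i := a))) \<partial>NN \<partial>NN) = (\<integral>\<^sup>+b. \<integral>\<^sup>+a. F (x(l := b, i := a)) \<partial>NN \<partial>NN)"
      using rot2_gauss[OF hm cs] unfolding eq h_def .
  qed
  also have "\<dots> = integral\<^sup>N (gauss n) F"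
    unfolding gauss_def2 J_def by (rule decomp2[OF K F', symmetric])
  finally show ?thesis .
qed

lemma givens_distr:
  assumes "i < n" "l < n" "i \<noteq> l" "c\<^sup>2 + s\<^sup>2 = 1" "c \<noteq> -1"
  shows "distr (gauss n) (gauss n) (givens n i l c s) = gauss n"
  apply (rule distr_eq_by_nn)
  using givens_meas[OF assms(1,2)] apply assumption
  apply (erule givens_nn[OF assms])
  done

definition flip :: "nat \<Rightarrow> nat \<Rightarrow> (nat \<Rightarrow> real) \<Rightarrow> (nat \<Rightarrow> real)" where
  "flip n i z = (\<lambda>k\<in>{..<n}. if k = i then - z i else z k)"

lemma flip_meas: "i < n \<Longrightarrow> flip n i \<in> gauss n \<rightarrow>\<^sub>M gauss n"
  unfolding flip_def gauss_def2
  by (intro measurable_restrict) (simp add: measurable_cong_sets[OF refl sets_NN])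

lemma flip_nn:
  assumes i: "i < n" and F: "F \<in> borel_measurable (gauss n)"
  shows "(\<integral>\<^sup>+z. F (flip n i z) \<partial>gauss n) = integral\<^sup>N (gauss n) F"
proof -
  define J where "J = {..<n} - {i}"
  have ins: "insert i J = {..<n}" using i by (auto simp: J_def)
  have fJ: "finite J" "i \<notin> J" by (auto simp: J_def)
  have F': "F \<in> borel_measurable (PiM (insert i J) (\<lambda>_::nat. NN))" using F ins by (simp add: gauss_def2)
  have FG: "(\<lambda>z. F (flip n i z)) \<in> borel_measurable (PiM (insert i J) (\<lambda>_::nat. NN))"
    using measurable_comp[OF flip_meas[OF i] F] ins by (simp add: comp_def gauss_def2)
  have "(\<integral>\<^sup>+z. F (flip n i z) \<partial>gauss n) = (\<integral>\<^sup>+x. \<integral>\<^sup>+a. F (flip n i (x(i := a))) \<partial>NN \<partial>PiM J (\<lambda>_. NN))"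
    using NNP.product_nn_integral_insert[OF fJ FG] unfolding gauss_def2 ins .
  also have "\<dots> = (\<integral>\<^sup>+x. \<integral>\<^sup>+a. F (x(i := a)) \<partial>NN \<partial>PiM J (\<lambda>_. NN))"
  proof (rule nn_integral_cong)
    fix x assume x: "x \<in> space (PiM J (\<lambda>_::nat. NN))"
    have xe: "\<And>k. k \<notin> J \<Longrightarrow> x k = undefined" using x by (auto simp: space_PiM PiE_def extensional_def)
    have eq: "flip n i (x(i := a)) = x(i := -a)" for a
      unfolding flip_def using i xe by (auto simp: fun_eq_iff J_def)
    have hm: "(\<lambda>a. F (x(i := a))) \<in> borel_measurable borel"
      using measurable_comp[OF measurable_component_update[OF x fJ(2)] F'] by (simp add: comp_def)
    have hm2: "(\<lambda>a. ennreal (std_normal_density a) * F (x(i := a))) \<in> borel_measurable borel"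
      using hm by measurable
    have "(\<integral>\<^sup>+a. F (x(i := -a)) \<partial>NN) = (\<integral>\<^sup>+a. ennreal (std_normal_density a) * F (x(i := -a)) \<partial>lborel)"
      using hm by (intro nn_integral_density) (auto intro!: measurable_compose[of uminus])
    also have "\<dots> = (\<integral>\<^sup>+a. ennreal (std_normal_density (0 + -1 * a)) * F (x(i := 0 + -1 * a)) \<partial>lborel)"
      by (simp add: std_normal_density_def)
    also have "\<dots> = (\<integral>\<^sup>+a. ennreal (std_normal_density a) * F (x(i := a)) \<partial>lborel)"
      using nn_integral_real_affine[OF hm2, of "-1" 0] by simp
    also have "\<dots> = (\<integral>\<^sup>+a. F (x(i := a)) \<partial>NN)"
      using hm by (intro nn_integral_density[symmetric]) auto
    finally show "(\<integral>\<^sup>+a. F (flip n i (x(i := a))) \<partial>NN) = (\<integral>\<^sup>+a. F (x(i := a)) \<partial>NN)"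
      unfolding eq .
  qed
  also have "\<dots> = integral\<^sup>N (gauss n) F"
    using NNP.product_nn_integral_insert[OF fJ F', symmetric] unfolding gauss_def2 ins .
  finally show ?thesis .
qed

lemma flip_distr: assumes "i < n" shows "distr (gauss n) (gauss n) (flip n i) = gauss n"
  apply (rule distr_eq_by_nn)
  using flip_meas[OF assms] apply assumption
  apply (erule flip_nn[OF assms])
  done

definition ipn :: "nat \<Rightarrow> (nat \<Rightarrow> real) \<Rightarrow> (nat \<Rightarrow> real) \<Rightarrow> real" where
  "ipn n x y = (\<Sum>k<n. x k * y k)"

lemma space_gauss: "space (gauss n) = {z. \<forall>k. n \<le> k \<longrightarrow> z k = undefined}"
  by (auto simp: gauss_def2 space_PiM PiE_def extensional_def)

definition isoG :: "nat \<Rightarrow> nat \<Rightarrow> ((nat \<Rightarrow> real) \<Rightarrow> (nat \<Rightarrow> real)) \<Rightarrow> bool" where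
  "isoG n p G \<longleftrightarrow> G \<in> gauss n \<rightarrow>\<^sub>M gauss n \<and> distr (gauss n) (gauss n) G = gauss n \<and>
     (\<forall>x\<in>space (gauss n). \<forall>y\<in>space (gauss n). ipn n (G x) (G y) = ipn n x y) \<and>
     (\<forall>z\<in>space (gauss n). \<forall>j<p. G z j = z j)"

lemma iso_id: "isoG n p id"
  unfolding isoG_def using distr_id[of "gauss n"] by (simp add: id_def)

lemma iso_comp:
  assumes G: "isoG n p G" and H: "isoG n p H"
  shows "isoG n p (H \<circ> G)"
proof -
  have Gm: "G \<in> gauss n \<rightarrow>\<^sub>M gauss n" and Hm: "H \<in> gauss n \<rightarrow>\<^sub>M gauss n" using G H by (auto simp: isoG_def)
  have sp: "\<And>x. x \<in> space (gauss n) \<Longrightarrow> G x \<in> space (gauss n)" using measurable_space[OF Gm] .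
  have "distr (gauss n) (gauss n) (H \<circ> G) = distr (distr (gauss n) (gauss n) G) (gauss n) H"
    by (rule distr_distr[OF Hm Gm, symmetric])
  also have "\<dots> = gauss n" using G H by (simp add: isoG_def)
  finally show ?thesis using G H sp measurable_comp[OF Gm Hm] unfolding isoG_def by auto
qed

lemma ipn_givens:
  assumes il: "i < n" "l < n" "i \<noteq> l" and cs: "c\<^sup>2 + s\<^sup>2 = 1"
  shows "ipn n (givens n i l c s x) (givens n i l c s y) = ipn n x y"
proof -
  let ?G = "givens n i l c s"
  define f where "f k = x k * y k" for k
  define g where "g k = ?G x k * ?G y k" for k
  have gk: "k < n \<Longrightarrow> g k = f k + (if k = i then g i - f i else 0) + (if k = l then g l - f l else 0)" for k
    using il by (auto simp: g_def f_def givens_def)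
  have "(\<Sum>k<n. g k) = (\<Sum>k<n. f k + (if k = i then g i - f i else 0) + (if k = l then g l - f l else 0))"
    by (rule sum.cong) (use gk in auto)
  also have "\<dots> = (\<Sum>k<n. f k) + (g i - f i) + (g l - f l)"
    using il by (simp add: sum.distrib)
  also have "g i + g l = f i + f l"
  proof -
    have "g i + g l = (c * x i - s * x l) * (c * y i - s * y l) + (s * x i + c * x l) * (s * y i + c * y l)"
      using il by (simp add: g_def givens_def)
    also have "\<dots> = (c\<^sup>2 + s\<^sup>2) * (x i * y i + x l * y l)" by (simp add: algebra_simps power2_eq_square)
    finally show ?thesis using cs by (simp add: f_def)
  qed
  hence "(\<Sum>k<n. f k) + (g i - f i) + (g l - f l) = (\<Sum>k<n. f k)" by simp
  finally show ?thesis by (simp add: ipn_def g_def f_def)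
qed

lemma iso_givens:
  assumes il: "i < n" "l < n" "i \<noteq> l" "p \<le> i" "p \<le> l" and cs: "c\<^sup>2 + s\<^sup>2 = 1" "c \<noteq> -1"
  shows "isoG n p (givens n i l c s)"
  unfolding isoG_def using givens_meas[OF il(1,2)] givens_distr[OF il(1-3) cs] ipn_givens[OF il(1-3) cs(1)] il
  by (auto simp: givens_def)

lemma ipn_flip: "i < n \<Longrightarrow> ipn n (flip n i x) (flip n i y) = ipn n x y"
  unfolding ipn_def flip_def by (intro sum.cong) auto

lemma iso_flip: "i < n \<Longrightarrow> p \<le> i \<Longrightarrow> isoG n p (flip n i)"
  unfolding isoG_def using flip_meas[of i n] flip_distr[of i n] ipn_flip[of i n]
  by (auto simp: flip_def)

definition ee :: "nat \<Rightarrow> nat \<Rightarrow> (nat \<Rightarrow> real)" where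
  "ee n p = (\<lambda>k\<in>{..<n}. if k = p then 1 else 0)"

lemma ipn_ee: "p < n \<Longrightarrow> ipn n (ee n p) y = y p"
proof -
  assume p: "p < n"
  have "(\<Sum>k<n. ee n p k * y k) = (\<Sum>k<n. if k = p then y k else 0)"
    by (rule sum.cong) (auto simp: ee_def)
  thus ?thesis using p by (simp add: ipn_def)
qed

lemma sum_single_support:
  fixes n p :: nat
  assumes "p < n" "\<And>k. k < n \<Longrightarrow> k \<noteq> p \<Longrightarrow> f k = (0::real)"
  shows "(\<Sum>k<n. f k) = f p"
proof -
  have "(\<Sum>k<n. f k) = (\<Sum>k<n. if k = p then f p else 0)"
    by (rule sum.cong) (use assms in auto)
  also have "\<dots> = f p" using assms(1) by (subst sum.delta) auto
  finally show ?thesis .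
qed

lemma to_ee:
  assumes "p < q" "q \<le> n" "a \<in> space (gauss n)" "ipn n a a = 1"
    "\<forall>j<n. (j < p \<or> q \<le> j) \<longrightarrow> a j = 0"
  shows "\<exists>G. isoG n p G \<and> G a = ee n p"
  using assms
proof (induction q arbitrary: a)
  case 0 thus ?case by simp
next
  case (Suc q)
  have ae: "\<And>k. n \<le> k \<Longrightarrow> a k = undefined" using Suc.prems(3) by (auto simp: space_gauss)
  show ?case
  proof (cases "q = p")
    case True
    have pn: "p < n" using Suc.prems True by simp
    have supp: "\<And>k. k < n \<Longrightarrow> k \<noteq> p \<Longrightarrow> a k = 0" using Suc.prems(5) True by auto
    have "ipn n a a = a p * a p" unfolding ipn_def by (rule sum_single_support[OF pn]) (use supp in auto)
    with Suc.prems(4) have "a p * a p = 1" by simp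
    hence "a p = 1 \<or> a p = -1" by (metis mult_cancel_left1 square_eq_iff)
    thus ?thesis
    proof
      assume "a p = 1"
      hence "id a = ee n p" using supp ae by (auto simp: ee_def fun_eq_iff)
      thus ?thesis using iso_id by blast
    next
      assume "a p = -1"
      hence "flip n p a = ee n p" using supp ae by (auto simp: ee_def flip_def fun_eq_iff)
      thus ?thesis using iso_flip[OF pn order.refl] by blast
    qed
  next
    case False
    hence pq: "p < q" using Suc.prems by simp
    show ?thesis
    proof (cases "a q = 0")
      case True
      have "\<forall>j<n. (j < p \<or> q \<le> j) \<longrightarrow> a j = 0"
        using Suc.prems(5) True by (metis Suc_leI le_neq_implies_less)
      thus ?thesis using Suc.IH[OF pq _ Suc.prems(3,4)] Suc.prems(2) by simp
    next
      case False
      define u where "u = a (q - 1)"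
      define v where "v = a q"
      define r where "r = sqrt (u\<^sup>2 + v\<^sup>2)"
      have v0: "v \<noteq> 0" using False v_def by simp
      have r0: "r > 0" using v0 by (simp add: r_def add_nonneg_pos)
      have r2: "r\<^sup>2 = u\<^sup>2 + v\<^sup>2" by (simp add: r_def)
      define c where "c = u / r"
      define s where "s = - v / r"
      have uv: "u\<^sup>2 + v\<^sup>2 > 0" using r0 r2 by (metis zero_less_power2 less_irrefl)
      have cs: "c\<^sup>2 + s\<^sup>2 = 1" using uv r2 v0
        by (simp add: c_def s_def power_divide add_divide_distrib[symmetric])
      have c1: "c \<noteq> -1"
      proof
        assume "c = -1"
        hence "u = - r" using r0 by (simp add: c_def field_simps)
        hence "u\<^sup>2 = r\<^sup>2" by simp
        with r2 v0 show False by simp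
      qed
      have qn: "q < n" using Suc.prems by simp
      have il: "q - 1 < n" "q < n" "q - 1 \<noteq> q" "p \<le> q - 1" "p \<le> q" using qn pq by auto
      let ?G = "givens n (q - 1) q c s"
      have isoR: "isoG n p ?G" by (rule iso_givens[OF il cs c1])
      define b where "b = ?G a"
      have bsp: "b \<in> space (gauss n)" unfolding b_def
        using measurable_space[OF givens_meas[OF il(1,2)] Suc.prems(3)] .
      have bip: "ipn n b b = 1" unfolding b_def using isoR Suc.prems(3,4) by (simp add: isoG_def)
      have bq1: "b (q - 1) = r"
      proof -
        have "b (q - 1) = c * u - s * v" using il by (simp add: b_def givens_def u_def v_def)
        also have "\<dots> = (u\<^sup>2 + v\<^sup>2) / r" by (simp add: c_def s_def power2_eq_square add_divide_distrib)
        also have "\<dots> = r" using r2 r0 by (simp add: field_simps power2_eq_square)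
        finally show ?thesis .
      qed
      have bq: "b q = 0"
      proof -
        have "b q = s * u + c * v" using il by (simp add: b_def givens_def u_def v_def)
        also have "\<dots> = 0" by (simp add: c_def s_def field_simps)
        finally show ?thesis .
      qed
      have bsupp: "\<forall>j<n. (j < p \<or> q \<le> j) \<longrightarrow> b j = 0"
      proof (intro allI impI)
        fix j assume j: "j < n" "j < p \<or> q \<le> j"
        show "b j = 0"
        proof (cases "j = q")
          case True thus ?thesis using bq by simp
        next
          case False
          hence "j \<noteq> q - 1" "j \<noteq> q" using j pq by auto
          hence "b j = a j" using j by (simp add: b_def givens_def)
          moreover have "a j = 0" using Suc.prems(5) j False by auto
          ultimately show ?thesis by simp
        qed
      qed
      obtain G' where G': "isoG n p G'" "G' b = ee n p"
        using Suc.IH[OF pq _ bsp bip bsupp] Suc.prems(2) by auto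
      have "isoG n p (G' \<circ> ?G)" by (rule iso_comp[OF isoR G'(1)])
      moreover have "(G' \<circ> ?G) a = ee n p" using G'(2) by (simp add: b_def)
      ultimately show ?thesis by blast
    qed
  qed
qed

lemma ortho_map:
  assumes "p \<le> n" "\<forall>j<p. u j \<in> space (gauss n)"
    "\<forall>j<p. \<forall>l<p. ipn n (u j) (u l) = (if j = l then 1 else 0)"
  shows "\<exists>T. isoG n 0 T \<and> (\<forall>z\<in>space (gauss n). \<forall>j<p. T z j = ipn n (u j) z)"
  using assms
proof (induction p)
  case 0 thus ?case using iso_id by blast
next
  case (Suc p)
  obtain T where T: "isoG n 0 T" "\<forall>z\<in>space (gauss n). \<forall>j<p. T z j = ipn n (u j) z"
    using Suc by auto
  have Tm: "T \<in> gauss n \<rightarrow>\<^sub>M gauss n" using T by (simp add: isoG_def)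
  have Tip: "\<And>x y. x \<in> space (gauss n) \<Longrightarrow> y \<in> space (gauss n) \<Longrightarrow> ipn n (T x) (T y) = ipn n x y"
    using T by (simp add: isoG_def)
  have up: "u p \<in> space (gauss n)" using Suc.prems by simp
  define a where "a = T (u p)"
  have asp: "a \<in> space (gauss n)" unfolding a_def using measurable_space[OF Tm up] .
  have aip: "ipn n a a = 1" unfolding a_def using Tip[OF up up] Suc.prems(3) by simp
  have asupp: "\<forall>j<n. (j < p \<or> n \<le> j) \<longrightarrow> a j = 0"
  proof (intro allI impI)
    fix j assume j: "j < n" "j < p \<or> n \<le> j"
    hence jp: "j < p" by simp
    hence "a j = ipn n (u j) (u p)" using T(2) up by (simp add: a_def)
    also have "\<dots> = 0" using Suc.prems(3) jp by simp
    finally show "a j = 0" .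
  qed
  have pn: "p < n" using Suc.prems by simp
  obtain G where G: "isoG n p G" "G a = ee n p" using to_ee[OF pn order.refl asp aip asupp] by blast
  have G0: "isoG n 0 G" using G(1) by (simp add: isoG_def)
  have Gip: "\<And>x y. x \<in> space (gauss n) \<Longrightarrow> y \<in> space (gauss n) \<Longrightarrow> ipn n (G x) (G y) = ipn n x y"
    using G(1) by (simp add: isoG_def)
  have "isoG n 0 (G \<circ> T)" by (rule iso_comp[OF T(1) G0])
  moreover have "\<forall>z\<in>space (gauss n). \<forall>j<Suc p. (G \<circ> T) z j = ipn n (u j) z"
  proof (intro ballI allI impI)
    fix z j assume z: "z \<in> space (gauss n)" and j: "j < Suc p"
    have Tz: "T z \<in> space (gauss n)" using measurable_space[OF Tm z] .
    show "(G \<circ> T) z j = ipn n (u j) z"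
    proof (cases "j < p")
      case True
      thus ?thesis using G(1) Tz T(2) z by (simp add: isoG_def)
    next
      case False
      hence jp: "j = p" using j by simp
      have "(G \<circ> T) z p = ipn n (ee n p) (G (T z))" using ipn_ee[OF pn] by simp
      also have "\<dots> = ipn n (G a) (G (T z))" using G(2) by simp
      also have "\<dots> = ipn n a (T z)" by (rule Gip[OF asp Tz])
      also have "\<dots> = ipn n (u p) z" unfolding a_def by (rule Tip[OF up z])
      finally show ?thesis using jp by simp
    qed
  qed
  ultimately show ?case by blast
qed

lemma NN_finite_null: "finite A \<Longrightarrow> emeasure NN A = 0"
proof -
  assume A: "finite A"
  have "A \<in> null_sets lborel" by (rule finite_imp_null_set_lborel[OF A])
  hence "A \<in> null_sets NN"
    by (subst null_sets_density_iff) (auto intro: AE_mp[OF AE_not_in])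
  thus ?thesis by auto
qed

lemma quad_finite:
  fixes \<alpha> C :: real assumes "\<alpha> \<noteq> 0"
  shows "finite {a. \<alpha> * a\<^sup>2 + C = 0}"
proof -
  have "{a. \<alpha> * a\<^sup>2 + C = 0} \<subseteq> {sqrt (- C / \<alpha>), - sqrt (- C / \<alpha>)}"
  proof
    fix a assume "a \<in> {a. \<alpha> * a\<^sup>2 + C = 0}"
    hence "a\<^sup>2 = - C / \<alpha>" using assms by (auto simp: field_simps)
    hence "\<bar>a\<bar> = sqrt (- C / \<alpha>)" by (metis real_sqrt_abs)
    thus "a \<in> {sqrt (- C / \<alpha>), - sqrt (- C / \<alpha>)}" by (auto simp: abs_if split: if_splits)
  qed
  thus ?thesis by (rule finite_subset) simp
qed

lemma gauss_quad_null:
  fixes \<alpha> :: real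
  assumes j: "j < n" and a0: "\<alpha> \<noteq> 0"
    and C: "C \<in> borel_measurable (gauss n)"
    and Cinv: "\<And>z a. C (z(j := a)) = C z"
  shows "emeasure (gauss n) {z \<in> space (gauss n). \<alpha> * (z j)\<^sup>2 + C z = 0} = 0"
proof -
  define J where "J = {..<n} - {j}"
  have ins: "insert j J = {..<n}" using j by (auto simp: J_def)
  have fJ: "finite J" "j \<notin> J" by (auto simp: J_def)
  let ?A = "{z \<in> space (gauss n). \<alpha> * (z j)\<^sup>2 + C z = 0}"
  have jm: "(\<lambda>z. z j) \<in> borel_measurable (gauss n)" using comp_meas[OF j] by (simp add: gauss_def2)
  have Am: "?A \<in> sets (gauss n)" using C jm by measurable
  have F': "indicator ?A \<in> borel_measurable (PiM (insert j J) (\<lambda>_::nat. NN))"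
    using Am unfolding ins gauss_def2 by simp
  have "emeasure (gauss n) ?A = integral\<^sup>N (gauss n) (indicator ?A)" using Am by simp
  also have "\<dots> = (\<integral>\<^sup>+x. \<integral>\<^sup>+a. indicator ?A (x(j := a)) \<partial>NN \<partial>PiM J (\<lambda>_. NN))"
    using NNP.product_nn_integral_insert[OF fJ F'] unfolding gauss_def2 ins .
  also have "\<dots> = (\<integral>\<^sup>+x. 0 \<partial>PiM J (\<lambda>_. NN))"
  proof (rule nn_integral_cong)
    fix x assume x: "x \<in> space (PiM J (\<lambda>_::nat. NN))"
    have xs: "x(j := a) \<in> space (gauss n)" for a
      using measurable_space[OF measurable_component_update[OF x fJ(2)], of a] unfolding ins gauss_def2 by simp
    have "(\<lambda>a. indicator ?A (x(j := a)) :: ennreal) = indicator {a. \<alpha> * a\<^sup>2 + C x = 0}"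
      using xs Cinv by (auto simp: indicator_def fun_eq_iff)
    moreover have "emeasure NN {a. \<alpha> * a\<^sup>2 + C x = 0} = 0"
      by (rule NN_finite_null[OF quad_finite[OF a0]])
    moreover have "{a. \<alpha> * a\<^sup>2 + C x = 0} \<in> sets NN" by simp
    ultimately show "(\<integral>\<^sup>+a. indicator ?A (x(j := a)) \<partial>NN) = 0" by simp
  qed
  also have "\<dots> = 0" by simp
  finally show ?thesis .
qed

lemma coord_meas: "j < n \<Longrightarrow> (\<lambda>z. z j) \<in> borel_measurable (gauss n)"
  using comp_meas by (simp add: gauss_def2)

lemma sumsq_meas:
  assumes "\<And>i. i \<in> I \<Longrightarrow> i < n"
  shows "(\<lambda>z. \<Sum>i\<in>I. (z i)\<^sup>2) \<in> borel_measurable (gauss n)"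
  by (rule borel_measurable_sum) (use coord_meas assms in auto)

definition fratio :: "nat \<Rightarrow> nat \<Rightarrow> (nat \<Rightarrow> real) \<Rightarrow> real" where
  "fratio d1 d2 z = ((\<Sum>i<d1. (z i)\<^sup>2) / real d1) / ((\<Sum>i\<in>{d1..<d1+d2}. (z i)\<^sup>2) / real d2)"

lemma fisher_tail_alt: "fisher_tail d1 d2 u = measure (gauss (d1 + d2)) {z \<in> space (gauss (d1 + d2)). fratio d1 d2 z > u}"
  unfolding fisher_tail_def fratio_def ..

lemma fratio_meas: "fratio d1 d2 \<in> borel_measurable (gauss (d1 + d2))"
  unfolding fratio_def
  by (intro borel_measurable_divide sumsq_meas) auto

lemma fratio_nonneg: "fratio d1 d2 z \<ge> 0"
  unfolding fratio_def by (intro divide_nonneg_nonneg sum_nonneg) auto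

lemma fratio_no_atom:
  assumes d: "1 \<le> d1" "1 \<le> d2"
  shows "measure (gauss (d1 + d2)) {z \<in> space (gauss (d1 + d2)). fratio d1 d2 z = u} = 0"
proof -
  define n where "n = d1 + d2"
  define B where "B z = (\<Sum>i\<in>{d1..<n}. (z i)\<^sup>2)" for z :: "nat \<Rightarrow> real"
  define C1 where "C1 z = real d2 * (\<Sum>i\<in>{1..<d1}. (z i)\<^sup>2) - u * real d1 * B z" for z :: "nat \<Rightarrow> real"
  define C2 where "C2 z = (\<Sum>i\<in>{d1..<n-1}. (z i)\<^sup>2)" for z :: "nat \<Rightarrow> real"
  let ?S1 = "{z \<in> space (gauss n). real d2 * (z 0)\<^sup>2 + C1 z = 0}"
  let ?S2 = "{z \<in> space (gauss n). 1 * (z (n - 1))\<^sup>2 + C2 z = 0}"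
  have n0: "0 < n" "n - 1 < n" using d by (auto simp: n_def)
  have Bm: "B \<in> borel_measurable (gauss n)" unfolding B_def by (rule sumsq_meas) auto
  have C1m: "C1 \<in> borel_measurable (gauss n)" unfolding C1_def using Bm
    by (intro borel_measurable_diff borel_measurable_times borel_measurable_const sumsq_meas) (auto simp: n_def)
  have C2m: "C2 \<in> borel_measurable (gauss n)" unfolding C2_def by (rule sumsq_meas) auto
  have C1i: "C1 (z(0 := a)) = C1 z" for z a
    unfolding C1_def B_def using d by (auto intro!: sum.cong arg_cong2[where f="(-)"] arg_cong2[where f="(*)"])
  have C2i: "C2 (z(n - 1 := a)) = C2 z" for z a
    unfolding C2_def by (intro sum.cong) auto
  have N1: "emeasure (gauss n) ?S1 = 0"
    by (rule gauss_quad_null[OF n0(1) _ C1m C1i]) (use d in auto)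
  have N2: "emeasure (gauss n) ?S2 = 0"
    by (rule gauss_quad_null[OF n0(2) _ C2m C2i]) simp
  have S1m: "?S1 \<in> sets (gauss n)" using C1m coord_meas[OF n0(1)] by measurable
  have S2m: "?S2 \<in> sets (gauss n)" using C2m coord_meas[OF n0(2)] by measurable
  have sub: "{z \<in> space (gauss n). fratio d1 d2 z = u} \<subseteq> ?S1 \<union> ?S2"
  proof
    fix z assume z: "z \<in> {z \<in> space (gauss n). fratio d1 d2 z = u}"
    have A: "(\<Sum>i<d1. (z i)\<^sup>2) = (z 0)\<^sup>2 + (\<Sum>i\<in>{1..<d1}. (z i)\<^sup>2)"
    proof -
      have "{..<d1} = insert 0 {1..<d1}" using d by auto
      thus ?thesis by simp
    qed
    have Bs: "B z = (z (n - 1))\<^sup>2 + C2 z"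
    proof -
      have "{d1..<n} = insert (n - 1) {d1..<n-1}" using d by (auto simp: n_def)
      thus ?thesis unfolding B_def C2_def by simp
    qed
    show "z \<in> ?S1 \<union> ?S2"
    proof (cases "B z = 0")
      case True thus ?thesis using z Bs by simp
    next
      case False
      have "fratio d1 d2 z = ((\<Sum>i<d1. (z i)\<^sup>2) / real d1) / (B z / real d2)"
        unfolding fratio_def B_def n_def ..
      hence "((\<Sum>i<d1. (z i)\<^sup>2) / real d1) / (B z / real d2) = u" using z by simp
      hence "real d2 * (\<Sum>i<d1. (z i)\<^sup>2) - u * real d1 * B z = 0"
        using False d by (auto simp: field_simps)
      hence "real d2 * (z 0)\<^sup>2 + C1 z = 0" unfolding C1_def A by (simp add: algebra_simps)
      thus ?thesis using z by simp
    qed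
  qed
  have "emeasure (gauss n) {z \<in> space (gauss n). fratio d1 d2 z = u} \<le> emeasure (gauss n) (?S1 \<union> ?S2)"
    by (rule emeasure_mono[OF sub]) (use S1m S2m in auto)
  also have "\<dots> \<le> emeasure (gauss n) ?S1 + emeasure (gauss n) ?S2"
    by (rule emeasure_subadditive[OF S1m S2m])
  also have "\<dots> = 0" using N1 N2 by simp
  finally have "emeasure (gauss n) {z \<in> space (gauss n). fratio d1 d2 z = u} = 0" by simp
  thus ?thesis unfolding n_def by (simp add: measure_def)
qed

lemma (in prob_space) pit:
  fixes R :: "'a \<Rightarrow> real" and F :: "real \<Rightarrow> real"
  assumes Rm: "R \<in> borel_measurable M" and Rnn: "\<And>x. R x \<ge> 0"
    and noatom: "\<And>u. measure M {x \<in> space M. R x = u} = 0"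
    and F: "\<And>u. F u = measure M {x \<in> space M. R x > u}"
    and t: "0 \<le> t"
  shows "measure M {x \<in> space M. F (R x) \<le> t} \<le> t"
proof (cases "t < 1")
  case False
  thus ?thesis using prob_le_1[of "{x \<in> space M. F (R x) \<le> t}"] by linarith
next
  case True
  define S where "S = {u. F u \<le> t}"
  have Fanti: "F v \<le> F u" if "u \<le> v" for u v
    unfolding F using that Rm by (intro finite_measure_mono) auto
  have Fneg: "u < 0 \<Longrightarrow> F u = 1" for u
  proof -
    assume "u < 0"
    hence "{x \<in> space M. R x > u} = space M" using Rnn by (auto intro: less_le_trans)
    thus ?thesis by (simp add: F prob_space)
  qed
  have S0: "\<And>s. s \<in> S \<Longrightarrow> 0 \<le> s"
  proof -
    fix s assume "s \<in> S"
    hence "F s \<le> t" by (simp add: S_def)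
    thus "0 \<le> s" using Fneg[of s] True by (cases "s < 0") auto
  qed
  show ?thesis
  proof (cases "S = {}")
    case True
    hence "{x \<in> space M. F (R x) \<le> t} = {}" by (auto simp: S_def)
    thus ?thesis using t by (simp only: measure_empty)
  next
    case False
    define us where "us = Inf S"
    have bdd: "bdd_below S" using S0 by (auto simp: bdd_below_def)
    have Fus: "F us \<le> t"
    proof -
      define A where "A k = {x \<in> space M. R x > us + 1 / (Suc k)}" for k :: nat
      have Am: "range A \<subseteq> sets M" unfolding A_def using Rm by auto
      have Ainc: "incseq A"
      proof (rule incseq_SucI)
        fix k
        have "us + 1 / real (Suc (Suc k)) \<le> us + 1 / real (Suc k)" by (simp add: frac_le)
        thus "A k \<subseteq> A (Suc k)" unfolding A_def by auto
      qed
      have UA: "(\<Union>k. A k) = {x \<in> space M. R x > us}"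
      proof
        show "(\<Union>k. A k) \<subseteq> {x \<in> space M. R x > us}"
          unfolding A_def by (auto intro: less_trans[rotated] simp: add_pos_pos)
        show "{x \<in> space M. R x > us} \<subseteq> (\<Union>k. A k)"
        proof
          fix x assume x: "x \<in> {x \<in> space M. R x > us}"
          hence "R x - us > 0" by simp
          from reals_Archimedean[OF this] obtain k where "inverse (real (Suc k)) < R x - us" ..
          hence "us + 1 / real (Suc k) < R x" by (simp add: inverse_eq_divide)
          hence "x \<in> A k" using x unfolding A_def by simp
          thus "x \<in> (\<Union>k. A k)" by blast
        qed
      qed
      have lim: "(\<lambda>k. measure M (A k)) \<longlonglongrightarrow> F us"
        using finite_Lim_measure_incseq[OF Am Ainc] unfolding UA F .
      have "\<And>k. measure M (A k) \<le> t"
      proof -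
        fix k
        have "Inf S < us + 1 / real (Suc k)" by (simp add: us_def)
        then obtain s where s: "s \<in> S" "s < us + 1 / real (Suc k)"
          using cInf_less_iff[OF False bdd] by blast
        have "measure M (A k) = F (us + 1 / real (Suc k))" by (simp add: A_def F)
        also have "\<dots> \<le> F s" using s by (intro Fanti) simp
        also have "\<dots> \<le> t" using s by (simp add: S_def)
        finally show "measure M (A k) \<le> t" .
      qed
      thus ?thesis using lim by (intro LIMSEQ_le_const2) auto
    qed
    have sub: "{x \<in> space M. F (R x) \<le> t} \<subseteq> {x \<in> space M. R x \<ge> us}"
    proof
      fix x assume "x \<in> {x \<in> space M. F (R x) \<le> t}"
      hence "R x \<in> S" "x \<in> space M" by (auto simp: S_def)
      thus "x \<in> {x \<in> space M. R x \<ge> us}" unfolding us_def using cInf_lower[OF _ bdd] by auto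
    qed
    have split: "{x \<in> space M. R x \<ge> us} = {x \<in> space M. R x > us} \<union> {x \<in> space M. R x = us}" by auto
    have "measure M {x \<in> space M. F (R x) \<le> t} \<le> measure M {x \<in> space M. R x \<ge> us}"
      by (rule finite_measure_mono[OF sub]) (use Rm in auto)
    also have "\<dots> = measure M {x \<in> space M. R x > us} + measure M {x \<in> space M. R x = us}"
      unfolding split by (rule finite_measure_Union) (use Rm in auto)
    also have "\<dots> = F us" using noatom F by simp
    finally show ?thesis using Fus by simp
  qed
qed

lemma ipn_sym: "ipn n x y = ipn n y x"
  unfolding ipn_def by (simp add: mult.commute)

lemma ipn_sum_left: "ipn n (\<lambda>i. \<Sum>j\<in>J. f j i) y = (\<Sum>j\<in>J. ipn n (f j) y)"
  unfolding ipn_def by (simp add: sum_distrib_right sum.swap[of _ J])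

lemma ipn_scale_left: "ipn n (\<lambda>i. c * x i) y = c * ipn n x y"
  unfolding ipn_def by (simp add: sum_distrib_left mult.assoc)

lemma ipn_scale_right: "ipn n x (\<lambda>i. c * y i) = c * ipn n x y"
  unfolding ipn_def by (simp add: sum_distrib_left algebra_simps)

lemma ipn_scale2: "ipn n (\<lambda>i. a * x i) (\<lambda>i. b * y i) = a * b * ipn n x y"
  unfolding ipn_def by (simp add: sum_distrib_left algebra_simps)

lemma ipn_diff_left: "ipn n (\<lambda>i. x i - z i) y = ipn n x y - ipn n z y"
  unfolding ipn_def by (simp add: sum_subtractf left_diff_distrib)

lemma ipn_diff_right: "ipn n x (\<lambda>i. y i - z i) = ipn n x y - ipn n x z"
  unfolding ipn_def by (simp add: sum_subtractf right_diff_distrib)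

lemma ipn_cong: "(\<And>i. i < n \<Longrightarrow> x i = x' i) \<Longrightarrow> (\<And>i. i < n \<Longrightarrow> y i = y' i) \<Longrightarrow> ipn n x y = ipn n x' y'"
  unfolding ipn_def by (intro sum.cong) auto

lemma ipn_self_zero:
  assumes "ipn n d d = 0" "i < n" shows "d i = 0"
proof -
  have "(\<Sum>k<n. d k * d k) = 0" using assms by (simp add: ipn_def)
  hence "\<forall>k\<in>{..<n}. d k * d k = 0" by (subst (asm) sum_nonneg_eq_0_iff) auto
  thus ?thesis using assms by auto
qed

locale eigsetup =
  fixes n :: nat and X :: "nat \<Rightarrow> 'h::real_inner" and r :: nat and lam :: "nat \<Rightarrow> real" and V :: "nat \<Rightarrow> 'h"
  assumes eig: "is_eigdec n X r lam V" and npos: "0 < n"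
begin

definition w :: "nat \<Rightarrow> nat \<Rightarrow> real" where "w j i = X i \<bullet> V j"

definition uu :: "nat \<Rightarrow> nat \<Rightarrow> real" where
  "uu j = (\<lambda>i\<in>{..<n}. w j i / sqrt (real n * lam j))"

lemma lam_pos: "j < r \<Longrightarrow> 0 < lam j"
  using eig by (simp add: is_eigdec_def)

lemma ipn_w: assumes "j < r" "l < r"
  shows "ipn n (w j) (w l) = (if j = l then real n * lam j else 0)"
proof -
  have "emp_cov n X (V j) = lam j *\<^sub>R V j" using eig assms by (simp add: is_eigdec_def)
  hence "emp_cov n X (V j) \<bullet> V l = lam j * (V j \<bullet> V l)" by simp
  also have "\<dots> = (if j = l then lam j else 0)" using eig assms by (simp add: is_eigdec_def)
  finally have e: "(1 / real n) * (\<Sum>i<n. (X i \<bullet> V j) * (X i \<bullet> V l)) = (if j = l then lam j else 0)"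
    by (simp add: emp_cov_def inner_sum_left)
  show ?thesis unfolding ipn_def w_def using e npos by (auto simp: field_simps split: if_splits)
qed

lemma uu_space: "uu j \<in> space (gauss n)"
  by (simp add: uu_def space_gauss)

lemma ipn_uu: assumes "j < r" "l < r"
  shows "ipn n (uu j) (uu l) = (if j = l then 1 else 0)"
proof -
  have "ipn n (uu j) (uu l) = ipn n (\<lambda>i. (1 / sqrt (real n * lam j)) * w j i) (\<lambda>i. (1 / sqrt (real n * lam l)) * w l i)"
    by (rule ipn_cong) (auto simp: uu_def)
  also have "\<dots> = (1 / sqrt (real n * lam j)) * (1 / sqrt (real n * lam l)) * ipn n (w j) (w l)"
    by (rule ipn_scale2)
  also have "\<dots> = (if j = l then 1 else 0)"
    using ipn_w[OF assms] lam_pos[OF assms(1)] npos by (auto simp: real_sqrt_mult[symmetric])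
  finally show ?thesis .
qed

lemma w_uu: "j < r \<Longrightarrow> i < n \<Longrightarrow> w j i = sqrt (real n * lam j) * uu j i"
  using lam_pos[of j] npos by (simp add: uu_def)

definition PP :: "nat \<Rightarrow> (nat \<Rightarrow> real) \<Rightarrow> (nat \<Rightarrow> real)" where
  "PP kh U = (\<lambda>i. if i < n then (\<Sum>j<kh. ipn n U (uu j) * uu j i) else 0)"

lemma ipn_PP_left: "ipn n (PP kh U) y = (\<Sum>j<kh. ipn n U (uu j) * ipn n (uu j) y)"
proof -
  have "ipn n (PP kh U) y = ipn n (\<lambda>i. \<Sum>j<kh. ipn n U (uu j) * uu j i) y"
    by (rule ipn_cong) (auto simp: PP_def)
  also have "\<dots> = (\<Sum>j<kh. ipn n U (uu j) * ipn n (uu j) y)"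
    by (simp add: ipn_sum_left ipn_scale_left)
  finally show ?thesis .
qed

lemma ipn_uu_PP: assumes "kh \<le> r" "l < kh"
  shows "ipn n (uu l) (PP kh U) = ipn n U (uu l)"
proof -
  have "ipn n (uu l) (PP kh U) = (\<Sum>j<kh. ipn n U (uu j) * ipn n (uu j) (uu l))"
    by (simp add: ipn_sym[of n "uu l"] ipn_PP_left)
  also have "\<dots> = (\<Sum>j<kh. if j = l then ipn n U (uu l) else 0)"
    by (rule sum.cong) (use assms ipn_uu in auto)
  also have "\<dots> = ipn n U (uu l)" using assms by simp
  finally show ?thesis .
qed

lemma proj_eq: assumes kr: "kh \<le> r"
  shows "proj n X V kh U = PP kh U"
  unfolding proj_def
proof (rule the_equality)
  show "(\<exists>c. \<forall>i<n. PP kh U i = (\<Sum>j<kh. c j * (X i \<bullet> V j))) \<and>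
     (\<forall>j<kh. (\<Sum>i<n. (U i - PP kh U i) * (X i \<bullet> V j)) = 0) \<and> (\<forall>i\<ge>n. PP kh U i = 0)"
  proof (intro conjI allI impI)
    show "\<exists>c. \<forall>i<n. PP kh U i = (\<Sum>j<kh. c j * (X i \<bullet> V j))"
    proof (intro exI allI impI)
      fix i assume i: "i < n"
      show "PP kh U i = (\<Sum>j<kh. (ipn n U (uu j) / sqrt (real n * lam j)) * (X i \<bullet> V j))"
        unfolding PP_def using i by (intro if_P[THEN trans] sum.cong) (auto simp: uu_def w_def)
    qed
  next
    fix l assume l: "l < kh"
    have "(\<Sum>i<n. (U i - PP kh U i) * (X i \<bullet> V l)) = ipn n (\<lambda>i. U i - PP kh U i) (w l)"
      by (simp add: ipn_def w_def)
    also have "\<dots> = ipn n (\<lambda>i. U i - PP kh U i) (\<lambda>i. sqrt (real n * lam l) * uu l i)"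
      by (rule ipn_cong) (use w_uu l kr in auto)
    also have "\<dots> = sqrt (real n * lam l) * (ipn n U (uu l) - ipn n (uu l) (PP kh U))"
      by (simp add: ipn_scale_right ipn_diff_left ipn_sym[of n "uu l"] right_diff_distrib)
    also have "\<dots> = 0" using ipn_uu_PP[OF kr l] by simp
    finally show "(\<Sum>i<n. (U i - PP kh U i) * (X i \<bullet> V l)) = 0" .
  next
    fix i :: nat assume "n \<le> i" thus "PP kh U i = 0" by (simp add: PP_def)
  qed
next
  fix p assume p: "(\<exists>c. \<forall>i<n. p i = (\<Sum>j<kh. c j * (X i \<bullet> V j))) \<and>
     (\<forall>j<kh. (\<Sum>i<n. (U i - p i) * (X i \<bullet> V j)) = 0) \<and> (\<forall>i\<ge>n. p i = 0)"
  then obtain c where c: "\<forall>i<n. p i = (\<Sum>j<kh. c j * (X i \<bullet> V j))" by blast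
  define d where "d i = p i - PP kh U i" for i
  define c' where "c' j = c j * sqrt (real n * lam j) - ipn n U (uu j)" for j
  have dform: "d i = (\<Sum>j<kh. c' j * uu j i)" if i: "i < n" for i
  proof -
    have "p i = (\<Sum>j<kh. c j * sqrt (real n * lam j) * uu j i)"
      using c i w_uu kr by (auto intro!: sum.cong simp: w_def)
    thus ?thesis unfolding d_def PP_def c'_def using i
      by (simp add: sum_subtractf[symmetric] left_diff_distrib)
  qed
  have orth: "ipn n d (uu l) = 0" if l: "l < kh" for l
  proof -
    have pl: "(\<Sum>i<n. (U i - p i) * (X i \<bullet> V l)) = 0" using p l by blast
    have "(\<Sum>i<n. (U i - p i) * (X i \<bullet> V l)) = sqrt (real n * lam l) * ipn n (\<lambda>i. U i - p i) (uu l)"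
      unfolding ipn_def using w_uu l kr by (simp add: w_def sum_distrib_left algebra_simps)
    hence "ipn n (\<lambda>i. U i - p i) (uu l) = 0" using pl lam_pos[of l] l kr npos by simp
    hence "ipn n U (uu l) - ipn n p (uu l) = 0" by (simp add: ipn_diff_left)
    moreover have "ipn n (PP kh U) (uu l) = ipn n U (uu l)" using ipn_uu_PP[OF kr l] by (simp add: ipn_sym)
    ultimately show ?thesis unfolding d_def by (simp add: ipn_diff_left)
  qed
  have "ipn n d d = ipn n (\<lambda>i. \<Sum>j<kh. c' j * uu j i) d" by (rule ipn_cong) (use dform in auto)
  also have "\<dots> = (\<Sum>j<kh. c' j * ipn n (uu j) d)" by (simp add: ipn_sum_left ipn_scale_left)
  also have "\<dots> = 0" using orth by (simp add: ipn_sym[of n "uu _"])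
  finally have dd: "ipn n d d = 0" .
  show "p = PP kh U"
  proof
    fix i show "p i = PP kh U i"
    proof (cases "i < n")
      case True thus ?thesis using ipn_self_zero[OF dd True] by (simp add: d_def)
    next
      case False thus ?thesis using p by (simp add: PP_def)
    qed
  qed
qed

definition AA :: "nat \<Rightarrow> (nat \<Rightarrow> real) \<Rightarrow> real" where
  "AA kh U = (\<Sum>j<kh. (ipn n U (uu j))\<^sup>2)"

lemma ipn_PP_PP: assumes "kh \<le> r" shows "ipn n (PP kh U) (PP kh U) = AA kh U"
  unfolding ipn_PP_left AA_def
  by (rule sum.cong) (use ipn_uu_PP[OF assms] in \<open>auto simp: power2_eq_square\<close>)

lemma ipn_U_PP: "ipn n U (PP kh U) = AA kh U"
  unfolding ipn_sym[of n U] ipn_PP_left AA_def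
  by (rule sum.cong) (auto simp: power2_eq_square ipn_sym)

lemma normn_sq: "(normn n v)\<^sup>2 = (1 / real n) * ipn n v v"
  unfolding normn_def ipn_def by (simp add: power2_eq_square[symmetric] sum_nonneg)

lemma ipn_resid: assumes "kh \<le> r"
  shows "ipn n (\<lambda>i. U i - PP kh U i) (\<lambda>i. U i - PP kh U i) = ipn n U U - AA kh U"
proof -
  have "ipn n (\<lambda>i. U i - PP kh U i) (\<lambda>i. U i - PP kh U i)
      = ipn n U U - ipn n U (PP kh U) - (ipn n (PP kh U) U - ipn n (PP kh U) (PP kh U))"
    by (simp only: ipn_diff_left ipn_diff_right)
  also have "\<dots> = ipn n U U - AA kh U"
    using ipn_U_PP[of U kh] ipn_PP_PP[OF assms, of U] ipn_sym[of n "PP kh U" U] by simp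
  finally show ?thesis .
qed

lemma phi_formula: assumes "kh \<le> r"
  shows "phi n X V kh U = (AA kh U / real n) / (((ipn n U U - AA kh U) / real n) / real (n - kh))"
proof -
  have e1: "proj n X V kh U = PP kh U" by (rule proj_eq[OF assms])
  show ?thesis unfolding phi_def e1 normn_sq ipn_PP_PP[OF assms] ipn_resid[OF assms] by simp
qed

lemma sum_split_at: "(k::nat) \<le> m \<Longrightarrow> (\<Sum>i<m. f i) = (\<Sum>i<k. f i) + (\<Sum>i\<in>{k..<m}. (f i :: real))"
proof -
  assume km: "k \<le> m"
  have "{..<m} = {..<k} \<union> {k..<m}" using km by auto
  moreover have "{..<k} \<inter> {k..<m} = {}" by auto
  ultimately show ?thesis by (simp add: sum.union_disjoint)
qed

lemma phi_fratio:
  assumes kr: "kh \<le> r" and k1: "1 \<le> kh" and kn: "kh < n"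
    and T1: "\<And>j. j < kh \<Longrightarrow> T j = ipn n (uu j) z"
    and T2: "ipn n T T = ipn n z z"
  shows "phi n X V kh z / real kh = fratio kh (n - kh) T"
proof -
  define P where "P = AA kh z"
  define Q where "Q = ipn n z z - AA kh z"
  define m where "m = real (n - kh)"
  have m0: "m > 0" using kn by (simp add: m_def)
  have sP: "(\<Sum>j<kh. (T j)\<^sup>2) = P"
    unfolding P_def AA_def by (rule sum.cong) (auto simp: T1 ipn_sym)
  have sQ: "(\<Sum>j\<in>{kh..<kh + (n - kh)}. (T j)\<^sup>2) = Q"
  proof -
    have "kh + (n - kh) = n" using kn by simp
    moreover have "ipn n T T = (\<Sum>j<kh. (T j)\<^sup>2) + (\<Sum>j\<in>{kh..<n}. (T j)\<^sup>2)"
      unfolding ipn_def using sum_split_at[of kh n "\<lambda>j. (T j)\<^sup>2"] kn by (simp add: power2_eq_square)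
    ultimately show ?thesis using T2 sP by (simp add: Q_def P_def)
  qed
  have lhs: "phi n X V kh z / real kh = ((P / real n) / ((Q / real n) / m)) / real kh"
    unfolding phi_formula[OF kr] P_def Q_def m_def ..
  have rhs: "fratio kh (n - kh) T = (P / real kh) / (Q / m)"
    unfolding fratio_def sP sQ m_def ..
  show ?thesis
  proof (cases "Q = 0")
    case True thus ?thesis unfolding lhs rhs by simp
  next
    case False thus ?thesis unfolding lhs rhs using m0 npos k1 by (simp add: field_simps)
  qed
qed

end

lemma gauss_prob: "prob_space (gauss d)"
  unfolding gauss_def2 by (rule prob_space_PiM) (rule NN_prob)

lemma ft_nonneg: "0 \<le> fisher_tail d1 d2 u"
  unfolding fisher_tail_def by simp

lemma ft_le1: "fisher_tail d1 d2 u \<le> 1"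
  unfolding fisher_tail_def using prob_space.prob_le_1[OF gauss_prob] by simp

lemma ft_anti: "u \<le> v \<Longrightarrow> fisher_tail d1 d2 v \<le> fisher_tail d1 d2 u"
proof -
  assume uv: "u \<le> v"
  interpret prob_space "gauss (d1 + d2)" by (rule gauss_prob)
  show ?thesis unfolding fisher_tail_alt using uv fratio_meas[of d1 d2]
    by (intro finite_measure_mono) auto
qed

lemma ft_meas: "fisher_tail d1 d2 \<in> borel_measurable borel"
proof -
  have "(\<lambda>u. - fisher_tail d1 d2 u) \<in> borel_measurable borel"
    by (rule borel_measurable_mono) (auto simp: mono_def ft_anti)
  hence "(\<lambda>u. - (- fisher_tail d1 d2 u)) \<in> borel_measurable borel" by measurable
  thus ?thesis by simp
qed

lemma ft_small:
  assumes a: "0 < a" shows "\<exists>u\<ge>0. fisher_tail d1 d2 u \<le> a"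
proof -
  interpret prob_space "gauss (d1 + d2)" by (rule gauss_prob)
  define A where "A k = {z \<in> space (gauss (d1 + d2)). fratio d1 d2 z > real k}" for k :: nat
  have Am: "range A \<subseteq> sets (gauss (d1 + d2))" unfolding A_def using fratio_meas[of d1 d2] by auto
  have Adec: "decseq A" unfolding A_def decseq_def by auto
  have IA: "(\<Inter>k. A k) = {}"
  proof -
    { fix z assume "z \<in> (\<Inter>k. A k)"
      hence "\<forall>k. fratio d1 d2 z > real k" by (auto simp: A_def)
      moreover from reals_Archimedean2 obtain k where "fratio d1 d2 z < real k" ..
      ultimately have False using less_asym by blast }
    thus ?thesis by blast
  qed
  have lim: "(\<lambda>k. measure (gauss (d1 + d2)) (A k)) \<longlonglongrightarrow> 0"
    using finite_Lim_measure_decseq[OF Am Adec] unfolding IA by simp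
  have "eventually (\<lambda>k. measure (gauss (d1 + d2)) (A k) < a) sequentially"
    by (rule order_tendstoD(2)[OF lim a])
  then obtain N where N: "\<And>k. k \<ge> N \<Longrightarrow> measure (gauss (d1 + d2)) (A k) < a"
    unfolding eventually_sequentially by blast
  obtain k where "measure (gauss (d1 + d2)) (A k) < a" using N[of N] by blast
  hence "fisher_tail d1 d2 (real k) \<le> a" by (simp add: fisher_tail_alt A_def)
  thus ?thesis by (intro exI[of _ "real k"]) auto
qed

lemma fti_mono:
  assumes a: "0 < a" "a \<le> b"
  shows "fisher_tail_inv d1 d2 b \<le> fisher_tail_inv d1 d2 a"
  unfolding fisher_tail_inv_def
proof (rule cInf_superset_mono)
  show "{u. 0 \<le> u \<and> fisher_tail d1 d2 u \<le> a} \<noteq> {}" using ft_small[OF a(1)] by auto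
  show "bdd_below {u. 0 \<le> u \<and> fisher_tail d1 d2 u \<le> b}" by (auto simp: bdd_below_def)
  show "{u. 0 \<le> u \<and> fisher_tail d1 d2 u \<le> a} \<subseteq> {u. 0 \<le> u \<and> fisher_tail d1 d2 u \<le> b}"
    using a by auto
qed

context eigsetup begin

lemma key_bound:
  assumes k1: "1 \<le> kh" and kr: "kh \<le> r" and kn: "kh < n" and t: "0 \<le> t"
  shows "{z \<in> space (gauss n). fisher_tail kh (n - kh) (phi n X V kh z / real kh) \<le> t} \<in> sets (gauss n)"
    and "measure (gauss n) {z \<in> space (gauss n). fisher_tail kh (n - kh) (phi n X V kh z / real kh) \<le> t} \<le> t"
proof -
  have nn: "kh + (n - kh) = n" using kn by simp
  obtain T where T: "isoG n 0 T" "\<forall>z\<in>space (gauss n). \<forall>j<kh. T z j = ipn n (uu j) z"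
    using ortho_map[of kh n uu] kn uu_space ipn_uu kr by fastforce
  have Tm: "T \<in> gauss n \<rightarrow>\<^sub>M gauss n" and Td: "distr (gauss n) (gauss n) T = gauss n"
    and Tip: "\<And>x. x \<in> space (gauss n) \<Longrightarrow> ipn n (T x) (T x) = ipn n x x"
    using T(1) by (auto simp: isoG_def)
  define F where "F = fisher_tail kh (n - kh)"
  define B where "B = {y \<in> space (gauss n). F (fratio kh (n - kh) y) \<le> t}"
  have Rm: "fratio kh (n - kh) \<in> borel_measurable (gauss n)" using fratio_meas[of kh "n - kh"] unfolding nn .
  have Bm: "B \<in> sets (gauss n)" unfolding B_def F_def
    using measurable_comp[OF Rm ft_meas] by (simp add: comp_def)
  have eq: "{z \<in> space (gauss n). fisher_tail kh (n - kh) (phi n X V kh z / real kh) \<le> t} = T -` B \<inter> space (gauss n)"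
  proof (intro set_eqI iffI)
    fix z assume z: "z \<in> {z \<in> space (gauss n). fisher_tail kh (n - kh) (phi n X V kh z / real kh) \<le> t}"
    hence zs: "z \<in> space (gauss n)" by simp
    have "phi n X V kh z / real kh = fratio kh (n - kh) (T z)"
      by (rule phi_fratio[OF kr k1 kn]) (use T(2) zs Tip in auto)
    thus "z \<in> T -` B \<inter> space (gauss n)"
      using z zs measurable_space[OF Tm zs] by (simp add: B_def F_def)
  next
    fix z assume z: "z \<in> T -` B \<inter> space (gauss n)"
    hence zs: "z \<in> space (gauss n)" by simp
    have "phi n X V kh z / real kh = fratio kh (n - kh) (T z)"
      by (rule phi_fratio[OF kr k1 kn]) (use T(2) zs Tip in auto)
    thus "z \<in> {z \<in> space (gauss n). fisher_tail kh (n - kh) (phi n X V kh z / real kh) \<le> t}"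
      using z zs by (simp add: B_def F_def)
  qed
  show "{z \<in> space (gauss n). fisher_tail kh (n - kh) (phi n X V kh z / real kh) \<le> t} \<in> sets (gauss n)"
    unfolding eq by (rule measurable_sets[OF Tm Bm])
  have "measure (gauss n) (T -` B \<inter> space (gauss n)) = measure (distr (gauss n) (gauss n) T) B"
    by (rule measure_distr[OF Tm Bm, symmetric])
  also have "\<dots> = measure (gauss n) B" unfolding Td ..
  also have "\<dots> \<le> t"
  proof -
    interpret prob_space "gauss (kh + (n - kh))" by (rule gauss_prob)
    have "measure (gauss (kh + (n - kh))) {x \<in> space (gauss (kh + (n - kh))). F (fratio kh (n - kh) x) \<le> t} \<le> t"
      apply (rule pit[where R="fratio kh (n - kh)" and F=F])
      apply (rule fratio_meas)
      apply (rule fratio_nonneg)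
      apply (rule fratio_no_atom)
      using k1 kn apply simp
      using k1 kn apply simp
      apply (simp add: F_def fisher_tail_alt)
      apply (rule t)
      done
    thus ?thesis unfolding nn B_def .
  qed
  finally show "measure (gauss n) {z \<in> space (gauss n). fisher_tail kh (n - kh) (phi n X V kh z / real kh) \<le> t} \<le> t"
    unfolding eq .
qed

lemma q_bound:
  fixes K :: "nat set" and \<alpha> :: real
  assumes K: "finite K" "K \<noteq> {}" and Kk: "\<And>k. k \<in> K \<Longrightarrow> 1 \<le> min k r \<and> min k r < n"
    and a: "0 < \<alpha>" "\<alpha> \<le> 1"
  shows "\<alpha> / real (card K) \<le> q_quant n X r V K \<alpha>"
proof -
  interpret prob_space "gauss n" by (rule gauss_prob)
  define FT where "FT k z = fisher_tail (min k r) (n - min k r) (phi n X V (min k r) z / real (min k r))" for k z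
  define Qs where "Qs = {t. \<alpha> \<le> measure (gauss n) {z \<in> space (gauss n). (INF k\<in>K. FT k z) \<le> t}}"
  have q: "q_quant n X r V K \<alpha> = Inf Qs" unfolding q_quant_def Qs_def FT_def ..
  have cK: "card K > 0" using K by (simp add: card_gt_0_iff)
  have INFin: "(INF k\<in>K. FT k z) \<in> (\<lambda>k. FT k z) ` K" for z
    using K by (simp add: cInf_eq_Min)
  have INFnn: "0 \<le> (INF k\<in>K. FT k z)" for z
    using INFin[of z] by (auto simp: FT_def ft_nonneg)
  have "1 \<in> Qs"
  proof -
    have le1: "(INF k\<in>K. FT k z) \<le> 1" for z
    proof -
      from INFin[of z] obtain k where "(INF k\<in>K. FT k z) = FT k z" by auto
      thus ?thesis by (simp add: FT_def ft_le1)
    qed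
    have "{z \<in> space (gauss n). (INF k\<in>K. FT k z) \<le> 1} = space (gauss n)"
      using le1 by auto
    thus ?thesis using a by (simp add: Qs_def prob_space)
  qed
  hence Qne: "Qs \<noteq> {}" by blast
  have "\<alpha> / real (card K) \<le> t" if t: "t \<in> Qs" for t
  proof (rule ccontr)
    assume "\<not> \<alpha> / real (card K) \<le> t"
    hence tl: "t < \<alpha> / real (card K)" by simp
    have al: "\<alpha> \<le> measure (gauss n) {z \<in> space (gauss n). (INF k\<in>K. FT k z) \<le> t}" using t by (simp add: Qs_def)
    show False
    proof (cases "t < 0")
      case True
      have "t < (INF k\<in>K. FT k z)" for z using INFnn[of z] True by linarith
      hence E: "{z \<in> space (gauss n). (INF k\<in>K. FT k z) \<le> t} = {}" by (auto simp: not_le)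
      have "\<alpha> \<le> 0" using al unfolding E measure_empty .
      thus False using a by simp
    next
      case False
      hence t0: "0 \<le> t" by simp
      define S where "S k = {z \<in> space (gauss n). FT k z \<le> t}" for k
      have Sm: "S k \<in> sets (gauss n)" if "k \<in> K" for k
        unfolding S_def FT_def using key_bound(1)[of "min k r" t] Kk[OF that] t0 by simp
      have Sb: "measure (gauss n) (S k) \<le> t" if "k \<in> K" for k
        unfolding S_def FT_def using key_bound(2)[of "min k r" t] Kk[OF that] t0 by simp
      have sub: "{z \<in> space (gauss n). (INF k\<in>K. FT k z) \<le> t} \<subseteq> (\<Union>k\<in>K. S k)"
      proof
        fix z assume z: "z \<in> {z \<in> space (gauss n). (INF k\<in>K. FT k z) \<le> t}"
        from INFin[of z] obtain k where k: "k \<in> K" "(INF k\<in>K. FT k z) = FT k z" by auto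
        thus "z \<in> (\<Union>k\<in>K. S k)" using z by (auto simp: S_def)
      qed
      have "measure (gauss n) {z \<in> space (gauss n). (INF k\<in>K. FT k z) \<le> t} \<le> measure (gauss n) (\<Union>k\<in>K. S k)"
        by (rule finite_measure_mono[OF sub]) (use Sm K in auto)
      also have "\<dots> \<le> (\<Sum>k\<in>K. measure (gauss n) (S k))"
        by (rule finite_measure_subadditive_finite) (use Sm K in auto)
      also have "\<dots> \<le> (\<Sum>k\<in>K. t)" by (rule sum_mono) (rule Sb)
      also have "\<dots> = real (card K) * t" by simp
      also have "\<dots> < real (card K) * (\<alpha> / real (card K))" using tl cK by (intro mult_strict_left_mono) auto
      also have "\<dots> = \<alpha>" using cK by simp
      finally show False using al by simp
    qed
  qed
  thus ?thesis unfolding q by (intro cInf_greatest[OF Qne]) auto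
qed

end

context eigsetup begin

lemma phi_Y_meas:
  fixes E :: "real measure" and \<theta> :: 'h
  assumes Em: "(\<lambda>x::real. x) \<in> borel_measurable E" and kr: "kh \<le> r"
  shows "(\<lambda>e. phi n X V kh (\<lambda>i. X i \<bullet> \<theta> + e i)) \<in> borel_measurable (PiM {..<n} (\<lambda>_. E))"
proof -
  let ?M = "PiM {..<n} (\<lambda>_::nat. E)"
  have ci: "(\<lambda>e. e i) \<in> borel_measurable ?M" if "i < n" for i
    using measurable_comp[OF measurable_component_singleton[of i "{..<n}" "\<lambda>_. E"] Em] that
    by (simp add: comp_def)
  have ip: "(\<lambda>e. ipn n (\<lambda>i. X i \<bullet> \<theta> + e i) g) \<in> borel_measurable ?M" for g
    unfolding ipn_def using ci by (intro borel_measurable_sum borel_measurable_times borel_measurable_add) auto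
  have ipp: "(\<lambda>e. ipn n (\<lambda>i. X i \<bullet> \<theta> + e i) (\<lambda>i. X i \<bullet> \<theta> + e i)) \<in> borel_measurable ?M"
    unfolding ipn_def using ci by (intro borel_measurable_sum borel_measurable_times borel_measurable_add) auto
  have aa: "(\<lambda>e. AA kh (\<lambda>i. X i \<bullet> \<theta> + e i)) \<in> borel_measurable ?M"
    unfolding AA_def using ip by (intro borel_measurable_sum borel_measurable_power) auto
  show ?thesis unfolding phi_formula[OF kr] using aa ipp
    by (intro borel_measurable_divide borel_measurable_diff) auto
qed

end

theorem proposition5p3:
  fixes X :: "nat \<Rightarrow> 'h::{real_inner, complete_space, second_countable_topology}"
    and \<theta> :: 'h and E :: "real measure" and \<sigma> \<alpha> :: real
    and n m r :: nat and lam :: "nat \<Rightarrow> real" and V :: "nat \<Rightarrow> 'h"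
  assumes theta: "\<theta> \<noteq> 0"
    and noise: "prob_space E" "integrable E (\<lambda>x. x)" "integrable E (\<lambda>x. x\<^sup>2)"
      "(\<integral>x. x \<partial>E) = 0" "(\<integral>x. x\<^sup>2 \<partial>E) = \<sigma>\<^sup>2" "\<sigma>\<^sup>2 > 0"
    and alpha: "0 < \<alpha>" "\<alpha> < 1"
    and kbar: "2 * 2 ^ m \<le> n"
    and eig: "is_eigdec n X r lam V"
  shows "measure (PiM {..<n} (\<lambda>_. E))
           {e \<in> space (PiM {..<n} (\<lambda>_. E)).
              test_stat n X r V ((\<lambda>j. 2 ^ j) ` {..m}) (q_quant n X r V ((\<lambda>j. 2 ^ j) ` {..m}) \<alpha>)
                 (\<lambda>i. X i \<bullet> \<theta> + e i) > 0}
         \<ge> measure (PiM {..<n} (\<lambda>_. E))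
           {e \<in> space (PiM {..<n} (\<lambda>_. E)).
              test_stat n X r V ((\<lambda>j. 2 ^ j) ` {..m}) (\<alpha> / real (card ((\<lambda>j::nat. (2::nat) ^ j) ` {..m})))
                 (\<lambda>i. X i \<bullet> \<theta> + e i) > 0}"
proof -
  define K :: "nat set" where "K = (\<lambda>j. 2 ^ j) ` {..m}"
  have "1 \<le> (2::nat) ^ m" by simp
  hence n2: "2 \<le> n" using kbar by linarith
  interpret eigsetup n X r lam V using eig n2 by unfold_locales auto
  have Kfin: "finite K" and Kne: "K \<noteq> {}" by (auto simp: K_def)
  have Kk: "1 \<le> k \<and> 2 * k \<le> n" if "k \<in> K" for k
  proof -
    from that obtain j where j: "j \<le> m" "k = 2 ^ j" by (auto simp: K_def)
    have A: "2 ^ j \<le> (2::nat) ^ m" using j(1) by (simp add: power_increasing)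
    have B: "1 \<le> (2::nat) ^ j" by simp
    show ?thesis unfolding j(2) using A B kbar by linarith
  qed
  have cK: "0 < card K" using Kfin Kne by (simp add: card_gt_0_iff)
  define M where "M = PiM {..<n} (\<lambda>_::nat. E)"
  interpret M: prob_space M unfolding M_def by (rule prob_space_PiM) (rule noise(1))
  have Em: "(\<lambda>x::real. x) \<in> borel_measurable E" by (rule borel_measurable_integrable[OF noise(2)])
  define a1 where "a1 = \<alpha> / real (card K)"
  define q where "q = q_quant n X r V K \<alpha>"
  have a1pos: "0 < a1" using alpha cK by (simp add: a1_def)
  have pw: "test_stat n X r V K q U > 0" if T1: "test_stat n X r V K a1 U > 0" for U
  proof -
    from T1 obtain k where k: "k \<in> {k \<in> K. k \<le> r}"
      and t1: "0 < ereal (phi n X V (min k r) U - real (min k r) * fisher_tail_inv (min k r) (n - min k r) a1)"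
      unfolding test_stat_def less_SUP_iff by blast
    have "1 \<le> k" "k \<le> r" using k Kk by auto
    hence r1: "1 \<le> r" by linarith
    have Kk': "1 \<le> min k' r \<and> min k' r < n" if "k' \<in> K" for k'
      using Kk[OF that] r1 by auto
    have qa: "a1 \<le> q" unfolding a1_def q_def by (rule q_bound[OF Kfin Kne Kk']) (use alpha in auto)
    have "fisher_tail_inv (min k r) (n - min k r) q \<le> fisher_tail_inv (min k r) (n - min k r) a1"
      by (rule fti_mono[OF a1pos qa])
    hence "real (min k r) * fisher_tail_inv (min k r) (n - min k r) q \<le> real (min k r) * fisher_tail_inv (min k r) (n - min k r) a1"
      by (intro mult_left_mono) auto
    hence "0 < ereal (phi n X V (min k r) U - real (min k r) * fisher_tail_inv (min k r) (n - min k r) q)"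
      using t1 by simp
    thus ?thesis unfolding test_stat_def less_SUP_iff using k by blast
  qed
  have meas: "{e \<in> space M. test_stat n X r V K q (\<lambda>i. X i \<bullet> \<theta> + e i) > 0} \<in> sets M"
  proof -
    have "(\<lambda>e. test_stat n X r V K q (\<lambda>i. X i \<bullet> \<theta> + e i)) \<in> borel_measurable M"
      unfolding test_stat_def
    proof (rule borel_measurable_SUP)
      show "countable {k \<in> K. k \<le> r}" using Kfin by (simp add: countable_finite)
      fix k assume "k \<in> {k \<in> K. k \<le> r}"
      have pm: "(\<lambda>e. phi n X V (min k r) (\<lambda>i. X i \<bullet> \<theta> + e i)) \<in> borel_measurable M"
        unfolding M_def by (rule phi_Y_meas[OF Em]) simp
      show "(\<lambda>e. ereal (phi n X V (min k r) (\<lambda>i. X i \<bullet> \<theta> + e i) - real (min k r) * fisher_tail_inv (min k r) (n - min k r) q)) \<in> borel_measurable M"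
        by (intro borel_measurable_ereal borel_measurable_diff pm borel_measurable_const)
    qed
    hence [measurable]: "(\<lambda>e. test_stat n X r V K q (\<lambda>i. X i \<bullet> \<theta> + e i)) \<in> borel_measurable M" .
    show ?thesis by measurable
  qed
  have sub: "{e \<in> space M. test_stat n X r V K a1 (\<lambda>i. X i \<bullet> \<theta> + e i) > 0}
      \<subseteq> {e \<in> space M. test_stat n X r V K q (\<lambda>i. X i \<bullet> \<theta> + e i) > 0}"
    using pw by auto
  have "measure M {e \<in> space M. test_stat n X r V K a1 (\<lambda>i. X i \<bullet> \<theta> + e i) > 0}
      \<le> measure M {e \<in> space M. test_stat n X r V K q (\<lambda>i. X i \<bullet> \<theta> + e i) > 0}"
    by (rule M.finite_measure_mono[OF sub meas])
  thus ?thesis unfolding M_def q_def a1_def K_def .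
qed


end
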